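(* Let $\mathcal{D}(\Lambda_{n,d})$ be the Drinfel'd double of $\Lambda_{n,d}$. As a coalgebra it is $\Lambda_{n,d}^{*cop}\otimes\Lambda_{n,d}$; writing its basis elements as $G^iX^j\gamma_\ell^m$ ($i,\ell\in\mathbb{Z}_n$, $0\leqslant j,m\leqslant d-1$, tensor sign omitted), its algebra structure is completely determined by the following relations: $G^n=1$, $X^d=0$, $GX=q^{-1}XG$; the product of elements $\gamma_\ell^m$ is the usual product of paths in $\Lambda_{n,d}$; $\gamma_\ell^mG=q^{-m}G\gamma_\ell^m$; and $$\gamma_\ell^mX=q^{-m}X\gamma_{\ell+1}^m-q^{-m}(m)_q\gamma_{\ell+1}^{m-1}+q^{\ell+1-m}(m)_qG\gamma_{\ell+1}^{m-1}.$$
   Context: $k$ is an algebraically closed field; $n,d$ are integers with $d\geqslant 2$, $d\mid n$, and $\mathrm{char}\,k\nmid n$; $q\in k$ is a fixed primitive $d$-th root of unity. $\Lambda_{n,d}$ is the path algebra over $k$ of the cyclic quiver with vertices $e_0,\dots,e_{n-1}$ (indices in $\mathbb{Z}_n$) and arrows $a_i:e_i\to e_{i+1}$, modulo the ideal generated by all paths of length $d$. Paths are written right to left; $\gamma_i^m=a_{i+m-1}\cdots a_{i+1}a_i$ is the path of length $m$ starting at $e_i$, with $\gamma_i^0=e_i$. $\Lambda_{n,d}$ is a Hopf algebra with $\varepsilon(e_i)=\delta_{i0}$, $\varepsilon(a_i)=0$, $\Delta(e_i)=\sum_{j+\ell=i}e_j\otimes e_\ell$, $\Delta(a_i)=\sum_{j+\ell=i}(e_j\otimes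 a_\ell+q^\ell a_j\otimes e_\ell)$, $S(e_i)=e_{-i}$, $S(a_i)=-q^{i+1}a_{-i-1}$. The Drinfel'd double of a finite-dimensional Hopf algebra $H$ is $H^{*cop}\otimes H$ as a coalgebra, with product $(\alpha\otimes h)(\beta\otimes g)=\alpha\,\beta(S^{-1}h^{(3)}\,?\,h^{(1)})\otimes h^{(2)}g$, where $\beta(S^{-1}h^{(3)}?h^{(1)})$ is $x\mapsto\beta(S^{-1}h^{(3)}xh^{(1)})$ (Sweedler notation). The algebra $\Lambda_{n,d}^{*cop}$ is identified with $\langle G,X\mid G^n=1,X^d=0,GX=q^{-1}XG\rangle$ via $\check e_i\mapsto G^i$, $\check a_i\mapsto G^iX$ (where $\check{}$ denotes the dual basis to the basis of paths), with $\Delta(G)=G\otimes G$, $\Delta(X)=X\otimes G+1\otimes X$. Also $(m)_q=1+q+\cdots+q^{m-1}$, $(0)_q=0$. *)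

theory Defs
  imports "HOL-Computational_Algebra.Polynomial"
begin

text \<open>Basis paths gamma_i^m are indexed by pairs (i,m) in {0..<n} x {0..<d}.
  An element of Lambda is a coefficient function on pairs; an element of the dual
  is given by its values on the basis paths (= coefficients in the dual basis);
  an element of the double H^{*cop} (x) H is a coefficient function on pairs of pairs
  (coefficient of dual-basis-element (x) path).\<close>

type_synonym 'a vec = "nat \<times> nat \<Rightarrow> 'a"
type_synonym 'a ten = "(nat \<times> nat) \<times> (nat \<times> nat) \<Rightarrow> 'a"

definition Bidx :: "nat \<Rightarrow> nat \<Rightarrow> (nat \<times> nat) set" where
  "Bidx n d = {0..<n} \<times> {0..<d}"

definition bv :: "nat \<times> nat \<Rightarrow> 'a::zero_neq_one vec" where
  "bv b = (\<lambda>c. if c = b then 1 else 0)"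

definition Vspace :: "nat \<Rightarrow> nat \<Rightarrow> 'a::zero vec set" where
  "Vspace n d = {x. \<forall>c. c \<notin> Bidx n d \<longrightarrow> x c = 0}"

definition Dspace :: "nat \<Rightarrow> nat \<Rightarrow> 'a::zero ten set" where
  "Dspace n d = {P. \<forall>c. c \<notin> Bidx n d \<times> Bidx n d \<longrightarrow> P c = 0}"

text \<open>Product of basis paths (right to left): gamma_i^s * gamma_j^t.\<close>
definition pathmul :: "nat \<Rightarrow> nat \<Rightarrow> nat \<times> nat \<Rightarrow> nat \<times> nat \<Rightarrow> 'a::field vec" where
  "pathmul n d a b = (if fst a = (fst b + snd b) mod n \<and> snd a + snd b < d
      then bv (fst b, snd a + snd b) else (\<lambda>_. 0))"

definition mulL :: "nat \<Rightarrow> nat \<Rightarrow> 'a::field vec \<Rightarrow> 'a vec \<Rightarrow> 'a vec" where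
  "mulL n d x y = (\<lambda>c. \<Sum>a\<in>Bidx n d. \<Sum>b\<in>Bidx n d. x a * y b * pathmul n d a b c)"

definition oneL :: "nat \<Rightarrow> 'a::field vec" where
  "oneL n = (\<lambda>c. \<Sum>i<n. bv (i, 0) c)"

definition tens :: "'a::field vec \<Rightarrow> 'a vec \<Rightarrow> 'a ten" where
  "tens x y = (\<lambda>c. x (fst c) * y (snd c))"

definition mulT :: "nat \<Rightarrow> nat \<Rightarrow> 'a::field ten \<Rightarrow> 'a ten \<Rightarrow> 'a ten" where
  "mulT n d X Y = (\<lambda>c. \<Sum>p\<in>Bidx n d \<times> Bidx n d. \<Sum>r\<in>Bidx n d \<times> Bidx n d.
      X p * Y r * pathmul n d (fst p) (fst r) (fst c) * pathmul n d (snd p) (snd r) (snd c))"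

definition coE :: "nat \<Rightarrow> nat \<Rightarrow> nat \<Rightarrow> 'a::field ten" where
  "coE n d i = (\<lambda>c. \<Sum>j<n. tens (bv (j, 0)) (bv ((i + n - j) mod n, 0)) c)"

definition coA :: "nat \<Rightarrow> nat \<Rightarrow> 'a::field \<Rightarrow> nat \<Rightarrow> 'a ten" where
  "coA n d q i = (\<lambda>c. \<Sum>j<n. tens (bv (j, 0)) (bv ((i + n - j) mod n, 1)) c
       + q ^ ((i + n - j) mod n) * tens (bv (j, 1)) (bv ((i + n - j) mod n, 0)) c)"

text \<open>Comultiplication on paths, as the algebra map determined by the generators:
  Delta(gamma_i^{m+1}) = Delta(a_{i+m}) Delta(gamma_i^m).\<close>
fun coPath :: "nat \<Rightarrow> nat \<Rightarrow> 'a::field \<Rightarrow> nat \<Rightarrow> nat \<Rightarrow> 'a ten" where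
  "coPath n d q i 0 = coE n d i"
| "coPath n d q i (Suc m) = mulT n d (coA n d q ((i + m) mod n)) (coPath n d q i m)"

text \<open>Coefficient of h1 (x) h2 (x) h3 in (Delta (x) id) Delta (gamma_h).\<close>
definition co3 :: "nat \<Rightarrow> nat \<Rightarrow> 'a::field \<Rightarrow> nat \<times> nat \<Rightarrow> nat \<times> nat \<Rightarrow> nat \<times> nat \<Rightarrow> nat \<times> nat \<Rightarrow> 'a" where
  "co3 n d q h h1 h2 h3 = (\<Sum>c\<in>Bidx n d. coPath n d q (fst h) (snd h) (c, h3) * coPath n d q (fst c) (snd c) (h1, h2))"

definition negm :: "nat \<Rightarrow> nat \<Rightarrow> nat" where
  "negm n i = (n - i mod n) mod n"

text \<open>Antipode on paths, as the anti-algebra map determined by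
  S(e_i) = e_{-i}, S(a_i) = - q^{i+1} a_{-i-1}.\<close>
fun Spath :: "nat \<Rightarrow> nat \<Rightarrow> 'a::field \<Rightarrow> nat \<Rightarrow> nat \<Rightarrow> 'a vec" where
  "Spath n d q i 0 = bv (negm n i, 0)"
| "Spath n d q i (Suc m) = mulL n d (Spath n d q i m)
      (\<lambda>c. - (q ^ Suc ((i + m) mod n)) * bv (negm n (Suc ((i + m) mod n)), 1) c)"

definition Slin :: "nat \<Rightarrow> nat \<Rightarrow> 'a::field \<Rightarrow> 'a vec \<Rightarrow> 'a vec" where
  "Slin n d q x = (\<lambda>c. \<Sum>b\<in>Bidx n d. x b * Spath n d q (fst b) (snd b) c)"

definition Sinv :: "nat \<Rightarrow> nat \<Rightarrow> 'a::field \<Rightarrow> 'a vec \<Rightarrow> 'a vec" where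
  "Sinv n d q x = (THE y. y \<in> Vspace n d \<and> Slin n d q y = x)"

text \<open>Product in H^{*} (dual to Delta): (f g)(x) = f(x1) g(x2).\<close>
definition conv :: "nat \<Rightarrow> nat \<Rightarrow> 'a::field \<Rightarrow> 'a vec \<Rightarrow> 'a vec \<Rightarrow> 'a vec" where
  "conv n d q f g = (\<lambda>x. if x \<in> Bidx n d then
      (\<Sum>p\<in>Bidx n d \<times> Bidx n d. coPath n d q (fst x) (snd x) p * f (fst p) * g (snd p)) else 0)"

text \<open>Drinfel'd double product of basis tensors (dual(b) (x) h)(dual(b') (x) g) =
  dual(b) * b'(S^{-1} h3 ? h1) (x) h2 g.\<close>
definition dbprod :: "nat \<Rightarrow> nat \<Rightarrow> 'a::field \<Rightarrow> nat \<times> nat \<Rightarrow> nat \<times> nat \<Rightarrow> nat \<times> nat \<Rightarrow> nat \<times> nat \<Rightarrow> 'a ten" where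
  "dbprod n d q b h b' g = (\<lambda>c. \<Sum>h1\<in>Bidx n d. \<Sum>h2\<in>Bidx n d. \<Sum>h3\<in>Bidx n d.
      co3 n d q h h1 h2 h3
      * conv n d q (bv b) (\<lambda>x. mulL n d (mulL n d (Sinv n d q (bv h3)) (bv x)) (bv h1) b') (fst c)
      * mulL n d (bv h2) (bv g) (snd c))"

definition mulD :: "nat \<Rightarrow> nat \<Rightarrow> 'a::field \<Rightarrow> 'a ten \<Rightarrow> 'a ten \<Rightarrow> 'a ten" where
  "mulD n d q P Q = (\<lambda>c. \<Sum>p\<in>Bidx n d \<times> Bidx n d. \<Sum>r\<in>Bidx n d \<times> Bidx n d.
      P p * Q r * dbprod n d q (fst p) (snd p) (fst r) (snd r) c)"

text \<open>Unit of the double: epsilon (x) 1, with epsilon = dual(e_0).\<close>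
definition oneD :: "nat \<Rightarrow> 'a::field ten" where
  "oneD n = tens (bv (0, 0)) (oneL n)"

fun powD :: "nat \<Rightarrow> nat \<Rightarrow> 'a::field \<Rightarrow> 'a ten \<Rightarrow> nat \<Rightarrow> 'a ten" where
  "powD n d q P 0 = oneD n"
| "powD n d q P (Suc k) = mulD n d q P (powD n d q P k)"

text \<open>G = dual(e_1) (x) 1, X = dual(a_0) (x) 1, gamma_l^m = epsilon (x) gamma_l^m.\<close>
definition Gd :: "nat \<Rightarrow> 'a::field ten" where
  "Gd n = tens (bv (1, 0)) (oneL n)"

definition Xd :: "nat \<Rightarrow> 'a::field ten" where
  "Xd n = tens (bv (0, 1)) (oneL n)"

definition gamD :: "nat \<Rightarrow> nat \<Rightarrow> nat \<Rightarrow> 'a::field ten" where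
  "gamD n l m = tens (bv (0, 0)) (bv (l mod n, m))"

definition qint :: "'a::field \<Rightarrow> nat \<Rightarrow> 'a" where
  "qint q m = (\<Sum>i<m. q ^ i)"

definition basisD :: "nat \<Rightarrow> nat \<Rightarrow> 'a::field \<Rightarrow> nat \<times> nat \<times> nat \<times> nat \<Rightarrow> 'a ten" where
  "basisD n d q idx = (case idx of (i, j, l, m) \<Rightarrow>
      mulD n d q (mulD n d q (powD n d q (Gd n) i) (powD n d q (Xd n) j)) (gamD n l m))"

end

theory Submission
  imports Defs "HOL-Number_Theory.Cong"
begin

lemma sum_single:
  assumes "finite A" "\<And>x. x \<in> A \<Longrightarrow> x \<noteq> a \<Longrightarrow> f x = 0"
  shows "sum f A = (if a \<in> A then f a else 0)"
proof (cases "a \<in> A")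
  case True
  then have "sum f A = f a + sum f (A - {a})" using assms(1) by (simp add: sum.remove)
  also have "sum f (A - {a}) = 0" using assms(2) by (intro sum.neutral) auto
  finally show ?thesis using True by simp
next
  case False
  then show ?thesis using assms by (auto intro: sum.neutral)
qed

lemma Bidx_iff[simp]: "(a, b) \<in> Bidx n d \<longleftrightarrow> a < n \<and> b < d"
  by (simp add: Bidx_def)

lemma Bidx_fin[simp]: "finite (Bidx n d)"
  by (simp add: Bidx_def)

lemma bv_apply: "bv b c = (if c = b then 1 else 0)"
  by (simp add: bv_def)

lemma ifone_mult[simp]: "(if P then (1::'a::field) else 0) * y = (if P then y else 0)"
  "y * (if P then (1::'a::field) else 0) = (if P then y else 0)" by auto

lemma sum2_delta:
  assumes "finite A" "finite B"
  shows "(\<Sum>x\<in>A. \<Sum>y\<in>B. (if x = a \<and> y = b then f x y else 0)) = (if a \<in> A \<and> b \<in> B then f a b else 0)"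
proof -
  have "(\<Sum>x\<in>A. \<Sum>y\<in>B. (if x = a \<and> y = b then f x y else 0)) = (\<Sum>x\<in>A. if x = a then (if b \<in> B then f x b else 0) else 0)"
    using assms by (intro sum.cong refl) (auto simp: sum.delta' cong: if_cong)
  also have "\<dots> = (if a \<in> A \<and> b \<in> B then f a b else 0)" using assms by (simp add: sum.delta')
  finally show ?thesis .
qed

lemma mulL_bv:
  assumes "a \<in> Bidx n d" "b \<in> Bidx n d"
  shows "mulL n d (bv a) (bv b) = (pathmul n d a b :: 'a::field vec)"
proof
  fix c
  have "mulL n d (bv a) (bv b) c = (\<Sum>a'\<in>Bidx n d. \<Sum>b'\<in>Bidx n d. (if a' = a then 1 else 0) * (if b' = b then 1 else 0) * (pathmul n d a' b' c :: 'a))"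
    by (simp add: mulL_def bv_def)
  also have "\<dots> = (\<Sum>a'\<in>Bidx n d. \<Sum>b'\<in>Bidx n d. (if a' = a \<and> b' = b then pathmul n d a' b' c else 0))"
    by (intro sum.cong refl) auto
  also have "\<dots> = pathmul n d a b c"
    using assms by (simp only: sum2_delta Bidx_fin) simp
  finally show "mulL n d (bv a) (bv b) c = (pathmul n d a b c :: 'a)" .
qed

lemma mulL_scale_left: "mulL n d (\<lambda>c. k * x c) y = (\<lambda>c. k * mulL n d x y c)"
  by (simp add: mulL_def sum_distrib_left mult.assoc)

lemma mulL_scale_right: "mulL n d x (\<lambda>c. k * y c) = (\<lambda>c. k * mulL n d x y c)"
  by (simp add: mulL_def sum_distrib_left algebra_simps)

lemma mulL_zero_left: "mulL n d (\<lambda>_. 0) y = (\<lambda>_. 0)"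
  by (simp add: mulL_def)


fun qbin :: "'a::field \<Rightarrow> nat \<Rightarrow> nat \<Rightarrow> 'a" where
  "qbin q 0 k = (if k = 0 then 1 else 0)"
| "qbin q (Suc m) 0 = 1"
| "qbin q (Suc m) (Suc k) = q ^ (m - k) * qbin q m k + qbin q m (Suc k)"

lemma qbin_gt: "m < k \<Longrightarrow> qbin q m k = 0"
proof (induction m arbitrary: k)
  case 0 then show ?case by simp
next
  case (Suc m) then show ?case by (cases k) auto
qed

lemma qbin_0[simp]: "qbin q m 0 = 1"
  by (cases m) auto

lemma qbin_same[simp]: "qbin q m m = 1"
  by (induction m) (auto simp: qbin_gt)

lemma qbin_1: "qbin q m 1 = qint q m"
  by (induction m) (auto simp: qint_def)

lemma qint_Suc: "qint q (Suc k) = 1 + q * qint q k"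
  unfolding qint_def by (subst sum.lessThan_Suc_shift) (simp add: sum_distrib_left)

lemma qbin_pred: "qbin q (Suc m) m = qint q (Suc m)"
proof (induction m)
  case 0 then show ?case by (simp add: qint_def)
next
  case (Suc m)
  have "qbin q (Suc (Suc m)) (Suc m) = q * qint q (Suc m) + 1"
    using Suc by simp
  also have "\<dots> = qint q (Suc (Suc m))"
    by (simp only: qint_Suc[of q "Suc m"] algebra_simps)
  finally show ?case .
qed

lemma inj_mod: "(y::nat) < n \<Longrightarrow> z < n \<Longrightarrow> (a + y) mod n = (a + z) mod n \<Longrightarrow> y = z"
  using cong_add_lcancel_nat[of a y z n] by (simp add: cong_def)

lemma modsub:
  assumes "(a::nat) < n" "y < n"
  shows "y = (i + n - a) mod n \<longleftrightarrow> (a + y) mod n = i mod n"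
proof
  assume "y = (i + n - a) mod n"
  then show "(a + y) mod n = i mod n" using assms by (simp add: mod_add_right_eq)
next
  assume h: "(a + y) mod n = i mod n"
  have "(a + (i + n - a) mod n) mod n = i mod n" using assms by (simp add: mod_add_right_eq)
  then show "y = (i + n - a) mod n" using h assms by (intro inj_mod[of y n "(i + n - a) mod n" a]) auto
qed

locale DD =
  fixes n d :: nat and q :: "'a::field"
  assumes d2: "2 \<le> d" and dn: "d dvd n" and n0: "0 < n" and qd: "q ^ d = 1"
    and qprim: "\<forall>k. 0 < k \<and> k < d \<longrightarrow> q ^ k \<noteq> 1"
begin

lemma qn: "q ^ n = 1"
  using dn qd by (metis dvd_def power_mult power_one)

lemma q_nz: "q \<noteq> 0"
  proof
  assume "q = 0" then have "q ^ d = 0" using d2 by simp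
  then show False using qd by simp
qed

lemma q_mod: "q ^ (x mod n) = q ^ x"
proof -
  have "q ^ x = q ^ (n * (x div n) + x mod n)" by simp
  also have "\<dots> = q ^ (x mod n)" by (simp only: power_add power_mult qn) simp
  finally show ?thesis by simp
qed

lemma dn_le: "d \<le> n" using dn n0 by (simp add: dvd_imp_le)
lemma n2: "2 \<le> n" using d2 dn_le by simp

end

definition pmC :: "nat \<Rightarrow> nat \<times> nat \<Rightarrow> nat \<times> nat \<Rightarrow> bool" where
  "pmC d b c = (fst c = fst b \<and> snd b \<le> snd c \<and> snd c < d)"
definition pmP :: "nat \<Rightarrow> nat \<times> nat \<Rightarrow> nat \<times> nat \<Rightarrow> nat \<times> nat" where
  "pmP n b c = ((fst b + snd b) mod n, snd c - snd b)"

lemma pm_char: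
  "pathmul n d a b c = (if a = pmP n b c \<and> pmC d b c then 1 else 0)"
  by (cases a; cases b; cases c) (auto simp: pathmul_def bv_def pmP_def pmC_def)

lemma pmP_in: "0 < n \<Longrightarrow> pmC d b c \<Longrightarrow> pmP n b c \<in> Bidx n d"
  by (cases b; cases c) (auto simp: pmP_def pmC_def)

lemma sum_pm_left:
  assumes "0 < n"
  shows "(\<Sum>a\<in>Bidx n d. f a * pathmul n d a b c) = (if pmC d b c then f (pmP n b c) else 0)"
proof -
  have "(\<Sum>a\<in>Bidx n d. f a * pathmul n d a b c) = (\<Sum>a\<in>Bidx n d. if a = pmP n b c then (if pmC d b c then f a else 0) else 0)"
    by (intro sum.cong refl) (simp add: pm_char)
  also have "\<dots> = (if pmC d b c then f (pmP n b c) else 0)"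
    using pmP_in[OF assms] by (simp add: sum.delta')
  finally show ?thesis .
qed

lemma mulT_inner:
  assumes "0 < n"
  shows "mulT n d X Y c = (\<Sum>r\<in>Bidx n d \<times> Bidx n d. Y r *
     (if pmC d (fst r) (fst c) \<and> pmC d (snd r) (snd c) then X (pmP n (fst r) (fst c), pmP n (snd r) (snd c)) else 0))"
proof -
  have "mulT n d X Y c = (\<Sum>r\<in>Bidx n d \<times> Bidx n d. \<Sum>p\<in>Bidx n d \<times> Bidx n d.
      X p * Y r * pathmul n d (fst p) (fst r) (fst c) * pathmul n d (snd p) (snd r) (snd c))"
    unfolding mulT_def by (rule sum.swap)
  also have "\<dots> = (\<Sum>r\<in>Bidx n d \<times> Bidx n d. Y r *
     (if pmC d (fst r) (fst c) \<and> pmC d (snd r) (snd c) then X (pmP n (fst r) (fst c), pmP n (snd r) (snd c)) else 0))"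
  proof (intro sum.cong refl)
    fix r
    have "(\<Sum>p\<in>Bidx n d \<times> Bidx n d. X p * Y r * pathmul n d (fst p) (fst r) (fst c) * pathmul n d (snd p) (snd r) (snd c))
      = Y r * (\<Sum>p1\<in>Bidx n d. (\<Sum>p2\<in>Bidx n d. (X (p1, p2) * pathmul n d p1 (fst r) (fst c)) * pathmul n d p2 (snd r) (snd c)))"
      unfolding sum.cartesian_product by (simp add: split_def sum_distrib_left algebra_simps)
    also have "\<dots> = Y r * (\<Sum>p1\<in>Bidx n d. (if pmC d (snd r) (snd c) then X (p1, pmP n (snd r) (snd c)) else 0) * pathmul n d p1 (fst r) (fst c))"
      by (intro arg_cong[where f="\<lambda>x. Y r * x"] sum.cong refl) (simp add: sum_pm_left[OF assms])
    also have "\<dots> = Y r * (if pmC d (fst r) (fst c) \<and> pmC d (snd r) (snd c) then X (pmP n (fst r) (fst c), pmP n (snd r) (snd c)) else 0)"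
      using sum_pm_left[OF assms, of "\<lambda>p1. X (p1, pmP n (snd r) (snd c))" d "fst r" "fst c"]
      by (cases "pmC d (snd r) (snd c)") simp_all
    finally show "(\<Sum>p\<in>Bidx n d \<times> Bidx n d. X p * Y r * pathmul n d (fst p) (fst r) (fst c) * pathmul n d (snd p) (snd r) (snd c)) =
      Y r * (if pmC d (fst r) (fst c) \<and> pmC d (snd r) (snd c) then X (pmP n (fst r) (fst c), pmP n (snd r) (snd c)) else 0)" .
  qed
  finally show ?thesis .
qed

lemma coA_cf:
  "coA n d q i ((a1, s1), (a2, s2)) = (if a1 < n \<and> a2 = (i + n - a1) mod n then
     (if s1 = 0 \<and> s2 = 1 then 1 else if s1 = 1 \<and> s2 = 0 then q ^ a2 else 0) else 0)"
proof -
  have "coA n d q i ((a1, s1), (a2, s2)) = (\<Sum>j<n. if j = a1 then (if a2 = (i + n - j) mod n then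
     (if s1 = 0 \<and> s2 = 1 then 1 else if s1 = 1 \<and> s2 = 0 then q ^ a2 else 0) else 0) else 0)"
    unfolding coA_def tens_def bv_def by (intro sum.cong refl) auto
  then show ?thesis by (simp add: sum.delta)
qed

lemma coE_cf:
  "coE n d i ((a1, s1), (a2, s2)) = (if a1 < n \<and> s1 = 0 \<and> s2 = 0 \<and> a2 = (i + n - a1) mod n then 1 else 0)"
proof -
  have "coE n d i ((a1, s1), (a2, s2)) = (\<Sum>j<n. if j = a1 then (if s1 = 0 \<and> s2 = 0 \<and> a2 = (i + n - j) mod n then 1 else 0) else 0)"
    unfolding coE_def tens_def bv_def by (intro sum.cong refl) auto
  also have "\<dots> = (if a1 < n \<and> s1 = 0 \<and> s2 = 0 \<and> a2 = (i + n - a1) mod n then 1 else 0)"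
    by (simp add: sum.delta)
  finally show ?thesis .
qed

lemma pascal_q:
  assumes "s1 + s2 = Suc m"
  shows "(if 1 \<le> s2 then qbin q m s1 * q ^ (s1 * f2) else 0) + (if 1 \<le> s1 then q ^ (f2 + s2) * (qbin q m (s1 - 1) * q ^ ((s1 - 1) * f2)) else 0)
     = qbin q (Suc m) s1 * q ^ (s1 * f2)"
proof (cases s1)
  case 0 then show ?thesis using assms by simp
next
  case (Suc k)
  then have s2: "s2 = m - k" "k \<le> m" using assms by auto
  have e: "q ^ (f2 + s2) * (qbin q m k * q ^ (k * f2)) = q ^ (m - k) * qbin q m k * q ^ (Suc k * f2)"
    by (simp only: power_add s2(1) mult_Suc) (simp add: algebra_simps)
  show ?thesis
  proof (cases "s2 = 0")
    case True
    then have "k = m" using s2 by simp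
    then show ?thesis using Suc e True by (simp add: qbin_gt algebra_simps)
  next
    case False
    then show ?thesis using Suc e by (simp add: algebra_simps)
  qed
qed

context DD begin

definition cpc :: "nat \<Rightarrow> nat \<Rightarrow> nat \<times> nat \<Rightarrow> nat \<times> nat \<Rightarrow> 'a" where
  "cpc i m c1 c2 = (if c1 \<in> Bidx n d \<and> c2 \<in> Bidx n d \<and> snd c1 + snd c2 = m \<and> (fst c1 + fst c2) mod n = i mod n
     then qbin q m (snd c1) * q ^ (snd c1 * fst c2) else 0)"

lemma A1:
  assumes "(f1 + f2) mod n = i mod n" "s1 + s2 = Suc m" "1 \<le> s2"
  shows "(f2 + (s2 - 1)) mod n = ((i + m) mod n + n - (f1 + s1) mod n) mod n"
proof -
  have "((f1 + s1) mod n + (f2 + (s2 - 1)) mod n) mod n = (f1 + s1 + (f2 + (s2 - 1))) mod n"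
    by (simp add: mod_add_eq)
  also have "f1 + s1 + (f2 + (s2 - 1)) = (f1 + f2) + m" using assms by simp
  also have "((f1 + f2) + m) mod n = ((i + m) mod n) mod n" using assms(1)
    by (simp add: mod_add_left_eq[symmetric, of "f1+f2"] mod_add_left_eq[symmetric, of i])
  finally show ?thesis using n0 by (subst modsub) auto
qed

lemma A2:
  assumes "(f1 + f2) mod n = i mod n" "s1 + s2 = Suc m" "1 \<le> s1"
  shows "(f2 + s2) mod n = ((i + m) mod n + n - (f1 + (s1 - 1)) mod n) mod n"
proof -
  have "((f1 + (s1 - 1)) mod n + (f2 + s2) mod n) mod n = (f1 + (s1 - 1) + (f2 + s2)) mod n"
    by (simp add: mod_add_eq)
  also have "f1 + (s1 - 1) + (f2 + s2) = (f1 + f2) + m" using assms by simp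
  also have "((f1 + f2) + m) mod n = ((i + m) mod n) mod n" using assms(1)
    by (simp add: mod_add_left_eq[symmetric, of "f1+f2"] mod_add_left_eq[symmetric, of i])
  finally show ?thesis using n0 by (subst modsub) auto
qed

lemma step_combine:
  assumes "Suc m < d"
  shows "(if ((f1,s1),(f2,s2-1)) \<in> Bidx n d \<times> Bidx n d then (if 1 \<le> s2 \<and> s1 < d \<and> s2 < d \<and> (f2 + (s2 - 1)) mod n = ((i + m) mod n + n - (f1 + s1) mod n) mod n then cpc i m (f1,s1) (f2,s2-1) else 0) else 0)
   + (if ((f1,s1-1),(f2,s2)) \<in> Bidx n d \<times> Bidx n d then (if 1 \<le> s1 \<and> s1 < d \<and> s2 < d \<and> (f2 + s2) mod n = ((i + m) mod n + n - (f1 + (s1 - 1))  mod n) mod n then q ^ ((f2 + s2) mod n) * cpc i m (f1,s1-1) (f2,s2) else 0) else 0)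
   = cpc i (Suc m) (f1,s1) (f2,s2)"
proof (cases "f1 < n \<and> f2 < n \<and> s1 < d \<and> s2 < d \<and> s1 + s2 = Suc m \<and> (f1 + f2) mod n = i mod n")
  case True
  have c1: "1 \<le> s2 \<Longrightarrow> cpc i m (f1,s1) (f2,s2-1) = qbin q m s1 * q ^ (s1 * f2)"
    using True by (auto simp: cpc_def)
  have c2: "1 \<le> s1 \<Longrightarrow> cpc i m (f1,s1-1) (f2,s2) = qbin q m (s1 - 1) * q ^ ((s1 - 1) * f2)"
    using True by (auto simp: cpc_def)
  have a1: "1 \<le> s2 \<Longrightarrow> (f2 + (s2 - 1)) mod n = ((i + m) mod n + n - (f1 + s1) mod n) mod n"
    using True by (intro A1) auto
  have a2: "1 \<le> s1 \<Longrightarrow> (f2 + s2) mod n = ((i + m) mod n + n - (f1 + (s1 - 1))  mod n) mod n"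
    using True by (intro A2) auto
  have "(if ((f1,s1),(f2,s2-1)) \<in> Bidx n d \<times> Bidx n d then (if 1 \<le> s2 \<and> s1 < d \<and> s2 < d \<and> (f2 + (s2 - 1)) mod n = ((i + m) mod n + n - (f1 + s1) mod n) mod n then cpc i m (f1,s1) (f2,s2-1) else 0) else 0)
     = (if 1 \<le> s2 then qbin q m s1 * q ^ (s1 * f2) else 0)"
  proof (cases "1 \<le> s2")
    case T2: True
    have mem: "((f1,s1),(f2,s2-1)) \<in> Bidx n d \<times> Bidx n d" using True by auto
    have cnd: "1 \<le> s2 \<and> s1 < d \<and> s2 < d \<and> (f2 + (s2 - 1)) mod n = ((i + m) mod n + n - (f1 + s1) mod n) mod n"
      using True T2 a1 by blast
    show ?thesis by (subst if_P[OF mem], subst if_P[OF cnd], subst if_P[OF T2]) (simp only: c1[OF T2])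
  next
    case False
    then show ?thesis by simp
  qed
  moreover have "(if ((f1,s1-1),(f2,s2)) \<in> Bidx n d \<times> Bidx n d then (if 1 \<le> s1 \<and> s1 < d \<and> s2 < d \<and> (f2 + s2) mod n = ((i + m) mod n + n - (f1 + (s1 - 1))  mod n) mod n then q ^ ((f2 + s2) mod n) * cpc i m (f1,s1-1) (f2,s2) else 0) else 0)
     = (if 1 \<le> s1 then q ^ (f2 + s2) * (qbin q m (s1 - 1) * q ^ ((s1 - 1) * f2)) else 0)"
  proof (cases "1 \<le> s1")
    case T2: True
    have mem: "((f1,s1-1),(f2,s2)) \<in> Bidx n d \<times> Bidx n d" using True by auto
    have cnd: "1 \<le> s1 \<and> s1 < d \<and> s2 < d \<and> (f2 + s2) mod n = ((i + m) mod n + n - (f1 + (s1 - 1))  mod n) mod n"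
      using True T2 a2 by blast
    show ?thesis by (subst if_P[OF mem], subst if_P[OF cnd], subst if_P[OF T2]) (simp only: q_mod c2[OF T2])
  next
    case False
    then show ?thesis by simp
  qed
  ultimately show ?thesis using True pascal_q[of s1 s2 m q f2] by (simp add: cpc_def)
next
  case False
  have z1: "cpc i m (f1,s1) (f2,s2-1) = 0" if "1 \<le> s2" "s2 < d" using False that unfolding cpc_def by auto
  have z2: "cpc i m (f1,s1-1) (f2,s2) = 0" if "1 \<le> s1" "s1 < d" using False that unfolding cpc_def by auto
  have z3: "cpc i (Suc m) (f1,s1) (f2,s2) = 0" using False unfolding cpc_def by auto
  show ?thesis using z1 z2 z3 by auto
qed

end

context DD begin

lemma coA_01: "coA n d q i ((a1, 0), (a2, 1)) = (if a1 < n \<and> a2 = (i + n - a1) mod n then 1 else 0)"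
  by (simp add: coA_cf)
lemma coA_10: "coA n d q i ((a1, 1), (a2, 0)) = (if a1 < n \<and> a2 = (i + n - a1) mod n then q ^ a2 else 0)"
  by (simp add: coA_cf)
lemma coA_oth: "\<not> (s1 = 0 \<and> s2 = 1) \<Longrightarrow> \<not> (s1 = 1 \<and> s2 = 0) \<Longrightarrow> coA n d q i ((a1, s1), (a2, s2)) = 0"
  unfolding coA_cf by auto

lemma point_step:
  assumes r: "r = ((g1,t1),(g2,t2))"
  shows "cpc i m (fst r) (snd r) * (if pmC d (fst r) (f1,s1) \<and> pmC d (snd r) (f2,s2) then coA n d q ((i+m) mod n) (pmP n (fst r) (f1,s1), pmP n (snd r) (f2,s2)) else 0)
   = (if r = ((f1,s1),(f2,s2-1)) then (if 1 \<le> s2 \<and> s1 < d \<and> s2 < d \<and> (f2 + (s2 - 1)) mod n = ((i + m) mod n + n - (f1 + s1) mod n) mod n then cpc i m (f1,s1) (f2,s2-1) else 0) else 0)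
   + (if r = ((f1,s1-1),(f2,s2)) then (if 1 \<le> s1 \<and> s1 < d \<and> s2 < d \<and> (f2 + s2) mod n = ((i + m) mod n + n - (f1 + (s1 - 1))  mod n) mod n then q ^ ((f2 + s2) mod n) * cpc i m (f1,s1-1) (f2,s2) else 0) else 0)"
proof (cases "g1 = f1 \<and> t1 \<le> s1 \<and> s1 < d \<and> g2 = f2 \<and> t2 \<le> s2 \<and> s2 < d")
  case False
  have B0: "\<not> (r = ((f1,s1),(f2,s2-1)) \<and> 1 \<le> s2 \<and> s1 < d \<and> s2 < d)"
  proof
    assume h: "r = ((f1,s1),(f2,s2-1)) \<and> 1 \<le> s2 \<and> s1 < d \<and> s2 < d"
    then have "g1 = f1 \<and> t1 \<le> s1 \<and> s1 < d \<and> g2 = f2 \<and> t2 \<le> s2 \<and> s2 < d" using r by simp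
    then show False using False by blast
  qed
  have B1: "\<not> (r = ((f1,s1-1),(f2,s2)) \<and> 1 \<le> s1 \<and> s1 < d \<and> s2 < d)"
  proof
    assume h: "r = ((f1,s1-1),(f2,s2)) \<and> 1 \<le> s1 \<and> s1 < d \<and> s2 < d"
    then have "g1 = f1 \<and> t1 \<le> s1 \<and> s1 < d \<and> g2 = f2 \<and> t2 \<le> s2 \<and> s2 < d" using r by simp
    then show False using False by blast
  qed
  have B2: "\<not> (pmC d (fst r) (f1,s1) \<and> pmC d (snd r) (f2,s2))"
  proof
    assume "pmC d (fst r) (f1,s1) \<and> pmC d (snd r) (f2,s2)"
    then have "g1 = f1 \<and> t1 \<le> s1 \<and> s1 < d \<and> g2 = f2 \<and> t2 \<le> s2 \<and> s2 < d" using r by (simp add: pmC_def)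
    then show False using False by blast
  qed
  have Z1: "(if r = ((f1,s1),(f2,s2-1)) then (if 1 \<le> s2 \<and> s1 < d \<and> s2 < d \<and> (f2 + (s2 - 1)) mod n = ((i + m) mod n + n - (f1 + s1) mod n) mod n then cpc i m (f1,s1) (f2,s2-1) else 0) else 0) = 0"
    using B0 by (simp only: de_Morgan_conj) (elim disjE; simp)
  have Z2: "(if r = ((f1,s1-1),(f2,s2)) then (if 1 \<le> s1 \<and> s1 < d \<and> s2 < d \<and> (f2 + s2) mod n = ((i + m) mod n + n - (f1 + (s1 - 1))  mod n) mod n then q ^ ((f2 + s2) mod n) * cpc i m (f1,s1-1) (f2,s2) else 0) else 0) = 0"
    using B1 by (simp only: de_Morgan_conj) (elim disjE; simp)
  show ?thesis by (simp only: Z1 Z2 if_not_P[OF B2]) simp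
next
  case True
  then have g: "g1 = f1" "g2 = f2" "t1 \<le> s1" "t2 \<le> s2" "s1 < d" "s2 < d" by auto
  have C: "pmC d (fst r) (f1,s1) \<and> pmC d (snd r) (f2,s2)" using r g by (simp add: pmC_def)
  have P: "pmP n (fst r) (f1,s1) = ((f1 + t1) mod n, s1 - t1)" "pmP n (snd r) (f2,s2) = ((f2 + t2) mod n, s2 - t2)"
    using r g by (auto simp: pmP_def)
  have lt: "(f1 + t1) mod n < n" using n0 by simp
  consider "t1 = s1 \<and> t2 + 1 = s2" | "t1 + 1 = s1 \<and> t2 = s2" | "\<not> (t1 = s1 \<and> t2 + 1 = s2) \<and> \<not> (t1 + 1 = s1 \<and> t2 = s2)" by blast
  then show ?thesis
  proof cases
    case 1
    then have t: "t1 = s1" "t2 = s2 - 1" "1 \<le> s2" by auto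
    have ne: "r \<noteq> ((f1,s1-1),(f2,s2))" using r t by auto
    have eq: "r = ((f1,s1),(f2,s2-1))" using r t g by auto
    have s: "s1 - t1 = 0" "s2 - t2 = 1" using t by auto
    show ?thesis
      unfolding if_P[OF C] P if_P[OF eq] if_not_P[OF ne] s coA_01 using eq lt t(3) g(5,6) by (simp only: t(1,2)) simp
  next
    case 2
    then have t: "t1 = s1 - 1" "t2 = s2" "1 \<le> s1" by auto
    have ne: "r \<noteq> ((f1,s1),(f2,s2-1))" using r t by auto
    have eq: "r = ((f1,s1-1),(f2,s2))" using r t g by auto
    have s: "s1 - t1 = 1" "s2 - t2 = 0" using t by auto
    show ?thesis
      unfolding if_P[OF C] P if_P[OF eq] if_not_P[OF ne] s coA_10 using eq lt t(3) g(5,6) by (simp only: t(1,2)) simp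
  next
    case 3
    have ne1: "r \<noteq> ((f1,s1),(f2,s2-1)) \<or> \<not> 1 \<le> s2" using r 3 g by auto
    have ne2: "r \<noteq> ((f1,s1-1),(f2,s2)) \<or> \<not> 1 \<le> s1" using r 3 g by auto
    have z: "coA n d q ((i+m) mod n) (((f1 + t1) mod n, s1 - t1), ((f2 + t2) mod n, s2 - t2)) = 0"
      using 3 g by (intro coA_oth) auto
    show ?thesis using C P ne1 ne2 z by auto
  qed
qed

lemma coPath_cf: "m < d \<Longrightarrow> coPath n d q i m c = cpc i m (fst c) (snd c)"
proof (induction m arbitrary: c)
  case 0
  obtain a1 s1 a2 s2 where c: "c = ((a1,s1),(a2,s2))" by (metis prod.collapse)
  have "coPath n d q i 0 c = (if a1 < n \<and> s1 = 0 \<and> s2 = 0 \<and> a2 = (i + n - a1) mod n then 1 else 0)"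
    using c by (simp add: coE_cf)
  also have "\<dots> = cpc i 0 (fst c) (snd c)"
  proof (cases "a1 < n \<and> a2 < n")
    case True
    then show ?thesis using c 0 modsub[of a1 n a2 i] by (auto simp: cpc_def)
  next
    case False
    then show ?thesis using c by (auto simp: cpc_def)
  qed
  finally show ?case .
next
  case (Suc m)
  obtain f1 s1 f2 s2 where c: "c = ((f1,s1),(f2,s2))" by (metis prod.collapse)
  let ?T1 = "\<lambda>r. (if r = ((f1,s1),(f2,s2-1)) then (if 1 \<le> s2 \<and> s1 < d \<and> s2 < d \<and> (f2 + (s2 - 1)) mod n = ((i + m) mod n + n - (f1 + s1) mod n) mod n then cpc i m (f1,s1) (f2,s2-1) else 0) else 0)"
  let ?T2 = "\<lambda>r. (if r = ((f1,s1-1),(f2,s2)) then (if 1 \<le> s1 \<and> s1 < d \<and> s2 < d \<and> (f2 + s2) mod n = ((i + m) mod n + n - (f1 + (s1 - 1))  mod n) mod n then q ^ ((f2 + s2) mod n) * cpc i m (f1,s1-1) (f2,s2) else 0) else 0)"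
  have "coPath n d q i (Suc m) c = mulT n d (coA n d q ((i + m) mod n)) (coPath n d q i m) c" by simp
  also have "\<dots> = (\<Sum>r\<in>Bidx n d \<times> Bidx n d. coPath n d q i m r *
     (if pmC d (fst r) (fst c) \<and> pmC d (snd r) (snd c) then coA n d q ((i + m) mod n) (pmP n (fst r) (fst c), pmP n (snd r) (snd c)) else 0))"
    by (rule mulT_inner[OF n0])
  also have "\<dots> = (\<Sum>r\<in>Bidx n d \<times> Bidx n d. ?T1 r + ?T2 r)"
  proof (intro sum.cong refl)
    fix r :: "(nat \<times> nat) \<times> (nat \<times> nat)"
    obtain g1 t1 g2 t2 where r: "r = ((g1,t1),(g2,t2))" by (metis prod.collapse)
    show "coPath n d q i m r *
     (if pmC d (fst r) (fst c) \<and> pmC d (snd r) (snd c) then coA n d q ((i + m) mod n) (pmP n (fst r) (fst c), pmP n (snd r) (snd c)) else 0)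
      = ?T1 r + ?T2 r"
    proof -
      have md: "m < d" using Suc.prems by simp
      show ?thesis unfolding Suc.IH[OF md] c fst_conv snd_conv by (rule point_step[OF r])
    qed
  qed
  also have "\<dots> = sum ?T1 (Bidx n d \<times> Bidx n d) + sum ?T2 (Bidx n d \<times> Bidx n d)"
    by (rule sum.distrib)
  also have "\<dots> = cpc i (Suc m) (f1,s1) (f2,s2)"
  proof -
    have fin: "finite (Bidx n d \<times> Bidx n d)" by simp
    show ?thesis unfolding sum.delta[OF fin] by (rule step_combine[OF Suc.prems])
  qed
  finally show ?case using c by simp
qed

end

fun scf :: "nat \<Rightarrow> 'a::field \<Rightarrow> nat \<Rightarrow> nat \<Rightarrow> 'a" where
  "scf n q i 0 = 1"
| "scf n q i (Suc m) = scf n q i m * (- (q ^ Suc ((i + m) mod n)))"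

lemma scf_nz: "q \<noteq> 0 \<Longrightarrow> scf n q i m \<noteq> 0"
  by (induction m) auto

lemma negm_lt: "0 < n \<Longrightarrow> negm n x < n"
  by (simp add: negm_def)

lemma negm_char:
  assumes "0 < n" "z < n"
  shows "z = negm n x \<longleftrightarrow> (x + z) mod n = 0"
proof -
  have "z = negm n x \<longleftrightarrow> z = (0 + n - x mod n) mod n" by (simp add: negm_def)
  also have "\<dots> \<longleftrightarrow> (x mod n + z) mod n = 0 mod n" using assms by (intro modsub) auto
  also have "\<dots> \<longleftrightarrow> (x + z) mod n = 0" by (simp add: mod_add_left_eq)
  finally show ?thesis .
qed

lemma negm_Suc_mod: "negm n (Suc (x mod n)) = negm n (Suc x)"
  by (simp add: negm_def mod_Suc_eq)

lemma negm_negm: "0 < n \<Longrightarrow> t < n \<Longrightarrow> negm n (negm n t) = t"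
  using negm_char[of n t "negm n t"] negm_char[of n "negm n t" t] negm_lt[of n t]
  by (simp add: add.commute)

context DD begin

lemma negm_step: "(negm n (Suc x) + 1) mod n = negm n x"
proof -
  have "(x + (negm n (Suc x) + 1) mod n) mod n = (Suc x + negm n (Suc x)) mod n"
    by (simp add: mod_add_right_eq)
  also have "\<dots> = 0" using negm_char[OF n0 negm_lt[OF n0], of "Suc x" "Suc x"] by simp
  finally show ?thesis using negm_char[OF n0, of "(negm n (Suc x) + 1) mod n" x] n0 by simp
qed

lemma Spath_cf: "m < d \<Longrightarrow> Spath n d q i m = (\<lambda>c. scf n q i m * bv (negm n (i + m), m) c)"
proof (induction m)
  case 0 then show ?case by (simp add: bv_def)
next
  case (Suc m)
  have u: "(negm n (i + m), m) \<in> Bidx n d" using Suc.prems negm_lt[OF n0] by simp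
  have v: "(negm n (Suc ((i + m) mod n)), 1) \<in> Bidx n d" using d2 negm_lt[OF n0] by simp
  have pm: "pathmul n d (negm n (i + m), m) (negm n (Suc ((i + m) mod n)), 1) = bv (negm n (i + Suc m), Suc m)"
    using Suc.prems negm_step[of "i+m"] by (simp add: pathmul_def negm_Suc_mod)
  have "Spath n d q i (Suc m) = mulL n d (\<lambda>c. scf n q i m * bv (negm n (i + m), m) c)
      (\<lambda>c. - (q ^ Suc ((i + m) mod n)) * bv (negm n (Suc ((i + m) mod n)), 1) c)"
    using Suc by simp
  also have "\<dots> = (\<lambda>c. scf n q i (Suc m) * bv (negm n (i + Suc m), Suc m) c)"
    by (simp only: mulL_scale_left mulL_scale_right mulL_bv[OF u v] pm) (simp add: algebra_simps)
  finally show ?case .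
qed

definition sig :: "nat \<times> nat \<Rightarrow> nat \<times> nat" where
  "sig b = (negm n (fst b + snd b), snd b)"

lemma sig_iff:
  assumes "b \<in> Bidx n d" "(t, k) \<in> Bidx n d"
  shows "sig b = (t, k) \<longleftrightarrow> b = (negm n (t + k), k)"
proof -
  obtain b1 k' where b: "b = (b1, k')" by fastforce
  have "sig b = (t, k) \<longleftrightarrow> k' = k \<and> t = negm n (b1 + k)" using b by (auto simp: sig_def)
  also have "\<dots> \<longleftrightarrow> k' = k \<and> (b1 + k + t) mod n = 0" using negm_char[OF n0] assms by simp
  also have "\<dots> \<longleftrightarrow> k' = k \<and> b1 = negm n (t + k)" using negm_char[OF n0, of b1 "t + k"] assms b
    by (simp add: algebra_simps)
  finally show ?thesis using b by auto
qed

lemma sig_in: "b \<in> Bidx n d \<Longrightarrow> sig b \<in> Bidx n d"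
  using negm_lt[OF n0] by (cases b) (auto simp: sig_def)

lemma Slin_cf: "Slin n d q y c = (\<Sum>b\<in>Bidx n d. y b * scf n q (fst b) (snd b) * bv (sig b) c)"
  unfolding Slin_def sig_def by (intro sum.cong refl) (auto simp: Spath_cf)

lemma Sinv_bv:
  assumes tk: "(t, k) \<in> Bidx n d"
  shows "Sinv n d q (bv (t, k)) = (\<lambda>c. inverse (scf n q (negm n (t + k)) k) * bv (negm n (t + k), k) c)"
  unfolding Sinv_def
proof (rule the_equality)
  let ?b0 = "(negm n (t + k), k)"
  let ?y0 = "\<lambda>c. inverse (scf n q (negm n (t + k)) k) * bv ?b0 c"
  have b0: "?b0 \<in> Bidx n d" using tk negm_lt[OF n0] by simp
  have sb0: "sig ?b0 = (t, k)" using sig_iff[OF b0 tk] by simp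
  show "?y0 \<in> Vspace n d \<and> Slin n d q ?y0 = bv (t, k)"
  proof
    show "?y0 \<in> Vspace n d" using b0 by (auto simp: Vspace_def bv_def)
    show "Slin n d q ?y0 = bv (t, k)"
    proof
      fix c
      have "Slin n d q ?y0 c = (\<Sum>b\<in>Bidx n d. if b = ?b0 then inverse (scf n q (negm n (t + k)) k) * scf n q (fst b) (snd b) * bv (sig b) c else 0)"
        unfolding Slin_cf by (intro sum.cong refl) (simp add: bv_def)
      also have "\<dots> = bv (t, k) c" using b0 sb0 scf_nz[OF q_nz] by (simp add: sum.delta)
      finally show "Slin n d q ?y0 c = bv (t, k) c" .
    qed
  qed
  fix y
  assume h: "y \<in> Vspace n d \<and> Slin n d q y = bv (t, k)"
  show "y = ?y0"
  proof
    fix b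
    show "y b = ?y0 b"
    proof (cases "b \<in> Bidx n d")
      case False
      have "y b = 0" using h False unfolding Vspace_def by blast
      moreover have "b \<noteq> ?b0" using False b0 by auto
      ultimately show ?thesis by (simp add: bv_def)
    next
      case True
      have "Slin n d q y (sig b) = (\<Sum>b'\<in>Bidx n d. if b' = b then y b' * scf n q (fst b') (snd b') else 0)"
        unfolding Slin_cf
      proof (intro sum.cong refl)
        fix b' assume b': "b' \<in> Bidx n d"
        have "sig b' = sig b \<longleftrightarrow> b' = b"
        proof -
          obtain t' k' where tk': "sig b = (t', k')" by fastforce
          have "(t', k') \<in> Bidx n d" using sig_in[OF True] tk' by simp
          then have "b = (negm n (t' + k'), k')" using sig_iff[OF True] tk' by blast
          then show ?thesis using sig_iff[OF b' \<open>(t', k') \<in> Bidx n d\<close>] tk' by simp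
        qed
        then show "y b' * scf n q (fst b') (snd b') * bv (sig b') (sig b) = (if b' = b then y b' * scf n q (fst b') (snd b') else 0)"
          by (auto simp: bv_def)
      qed
      also have "\<dots> = y b * scf n q (fst b) (snd b)" using True by (simp add: sum.delta)
      finally have e: "y b * scf n q (fst b) (snd b) = bv (t, k) (sig b)" using h by simp
      have "bv (t, k) (sig b) = (if b = ?b0 then 1 else 0)" using sig_iff[OF True tk] by (simp add: bv_def)
      then show ?thesis using e scf_nz[OF q_nz, of n "fst b" "snd b"]
        by (auto simp: bv_def field_simps)
    qed
  qed
qed

end

context DD begin

lemma conv_cf: "x \<in> Bidx n d \<Longrightarrow> conv n d q f g x = (\<Sum>p\<in>Bidx n d \<times> Bidx n d. cpc (fst x) (snd x) (fst p) (snd p) * f (fst p) * g (snd p))"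
  unfolding conv_def by (cases x) (auto simp: coPath_cf intro!: sum.cong)

lemma conv_out: "x \<notin> Bidx n d \<Longrightarrow> conv n d q f g x = 0"
  unfolding conv_def by simp

lemma conv_bv:
  assumes "a \<in> Bidx n d" "b \<in> Bidx n d"
  shows "conv n d q (bv a) (bv b) x = (if x \<in> Bidx n d then cpc (fst x) (snd x) a b else 0)"
proof (cases "x \<in> Bidx n d")
  case True
  have "conv n d q (bv a) (bv b) x = (\<Sum>p\<in>Bidx n d \<times> Bidx n d. if p = (a, b) then cpc (fst x) (snd x) a b else 0)"
    unfolding conv_cf[OF True] by (intro sum.cong refl) (auto simp: bv_def)
  also have "\<dots> = cpc (fst x) (snd x) a b" using assms by (simp add: sum.delta)
  finally show ?thesis using True by simp
qed (simp add: conv_out)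

lemma d0: "0 < d" using d2 by simp

lemma conv_lunit: "conv n d q (bv (0,0)) g x = (if x \<in> Bidx n d then g x else 0)"
proof (cases "x \<in> Bidx n d")
  case True
  have "conv n d q (bv (0,0)) g x = (\<Sum>p\<in>Bidx n d \<times> Bidx n d. if p = ((0,0), x) then g x else 0)"
    unfolding conv_cf[OF True]
  proof (intro sum.cong refl)
    fix p assume p: "p \<in> Bidx n d \<times> Bidx n d"
    obtain a s b t where pp: "p = ((a,s),(b,t))" by (metis prod.collapse)
    obtain x1 x2 where xx: "x = (x1, x2)" by fastforce
    show "cpc (fst x) (snd x) (fst p) (snd p) * bv (0, 0) (fst p) * g (snd p) = (if p = ((0, 0), x) then g x else 0)"
      using p pp xx True d0 n0 by (auto simp: cpc_def bv_def)
  qed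
  also have "\<dots> = g x" using True d0 n0 by (simp add: sum.delta)
  finally show ?thesis using True by simp
qed (simp add: conv_out)

lemma conv_runit: "conv n d q f (bv (0,0)) x = (if x \<in> Bidx n d then f x else 0)"
proof (cases "x \<in> Bidx n d")
  case True
  have "conv n d q f (bv (0,0)) x = (\<Sum>p\<in>Bidx n d \<times> Bidx n d. if p = (x, (0,0)) then f x else 0)"
    unfolding conv_cf[OF True]
  proof (intro sum.cong refl)
    fix p assume p: "p \<in> Bidx n d \<times> Bidx n d"
    obtain a s b t where pp: "p = ((a,s),(b,t))" by (metis prod.collapse)
    obtain x1 x2 where xx: "x = (x1, x2)" by fastforce
    show "cpc (fst x) (snd x) (fst p) (snd p) * f (fst p) * bv (0, 0) (snd p) = (if p = (x, (0,0)) then f x else 0)"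
      using p pp xx True d0 n0 by (auto simp: cpc_def bv_def)
  qed
  also have "\<dots> = f x" using True d0 n0 by (simp add: sum.delta)
  finally show ?thesis using True by simp
qed (simp add: conv_out)

lemma conv_scale_left: "conv n d q (\<lambda>x. k * f x) g = (\<lambda>x. k * conv n d q f g x)"
  unfolding conv_def by (auto simp: sum_distrib_left algebra_simps)

lemma conv_scale_right: "conv n d q f (\<lambda>x. k * g x) = (\<lambda>x. k * conv n d q f g x)"
  unfolding conv_def by (auto simp: sum_distrib_left algebra_simps)

lemma co3_cf:
  assumes h: "(l, m) \<in> Bidx n d"
  shows "co3 n d q (l, m) h1 h2 h3 = (if h1 \<in> Bidx n d \<and> h2 \<in> Bidx n d \<and> h3 \<in> Bidx n d \<and> snd h1 + snd h2 + snd h3 = m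
      \<and> (fst h1 + fst h2 + fst h3) mod n = l
     then qbin q m (snd h1 + snd h2) * q ^ ((snd h1 + snd h2) * fst h3) * (qbin q (snd h1 + snd h2) (snd h1) * q ^ (snd h1 * fst h2)) else 0)"
proof -
  obtain f1 s1 where 1: "h1 = (f1, s1)" by fastforce
  obtain f2 s2 where 2: "h2 = (f2, s2)" by fastforce
  obtain f3 s3 where 3: "h3 = (f3, s3)" by fastforce
  let ?c0 = "((f1 + f2) mod n, s1 + s2)"
  have "co3 n d q (l, m) h1 h2 h3 = (\<Sum>c\<in>Bidx n d. if c = ?c0 then cpc l m ?c0 h3 * cpc (fst ?c0) (snd ?c0) h1 h2 else 0)"
    unfolding co3_def
  proof (intro sum.cong refl)
    fix c assume c: "c \<in> Bidx n d"
    obtain c1 c2 where cc: "c = (c1, c2)" by fastforce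
    have e: "coPath n d q (fst (l, m)) (snd (l, m)) (c, h3) * coPath n d q (fst c) (snd c) (h1, h2) = cpc l m c h3 * cpc c1 c2 h1 h2"
      using h c cc by (simp add: coPath_cf)
    show "coPath n d q (fst (l, m)) (snd (l, m)) (c, h3) * coPath n d q (fst c) (snd c) (h1, h2) =
         (if c = ?c0 then cpc l m ?c0 h3 * cpc (fst ?c0) (snd ?c0) h1 h2 else 0)"
    proof (cases "c = ?c0")
      case True then show ?thesis using e cc by simp
    next
      case False
      then have "cpc c1 c2 h1 h2 = 0" using cc c 1 2 by (auto simp: cpc_def)
      then show ?thesis using e False by simp
    qed
  qed
  also have "\<dots> = (if ?c0 \<in> Bidx n d then cpc l m ?c0 h3 * cpc (fst ?c0) (snd ?c0) h1 h2 else 0)"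
    by (simp add: sum.delta)
  also have "\<dots> = (if h1 \<in> Bidx n d \<and> h2 \<in> Bidx n d \<and> h3 \<in> Bidx n d \<and> snd h1 + snd h2 + snd h3 = m
      \<and> (fst h1 + fst h2 + fst h3) mod n = l
     then qbin q m (snd h1 + snd h2) * q ^ ((snd h1 + snd h2) * fst h3) * (qbin q (snd h1 + snd h2) (snd h1) * q ^ (snd h1 * fst h2)) else 0)"
  proof -
    have lm: "l < n" "m < d" using h by auto
    have md: "((f1 + f2) mod n + f3) mod n = (f1 + f2 + f3) mod n" by (simp add: mod_add_left_eq)
    show ?thesis using lm 1 2 3 n0 by (auto simp: cpc_def md)
  qed
  finally show ?thesis .
qed

lemma tri:
  assumes "u \<in> Bidx n d" "x \<in> Bidx n d" "h \<in> Bidx n d"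
  shows "mulL n d (mulL n d (bv u) (bv x)) (bv h) b' = (if fst u = (fst x + snd x) mod n \<and> fst x = (fst h + snd h) mod n
     \<and> snd u + snd x + snd h < d \<and> b' = (fst h, snd u + snd x + snd h) then 1 else 0)"
proof (cases "fst u = (fst x + snd x) mod n \<and> snd u + snd x < d")
  case True
  then have m1: "mulL n d (bv u) (bv x) = bv (fst x, snd u + snd x)" using assms by (simp add: mulL_bv pathmul_def)
  have in1: "(fst x, snd u + snd x) \<in> Bidx n d" using True assms by (cases x) auto
  show ?thesis unfolding m1 mulL_bv[OF in1 assms(3)] using True by (auto simp: pathmul_def bv_def)
next
  case False
  have m1: "mulL n d (bv u) (bv x) = (\<lambda>_. 0)" unfolding mulL_bv[OF assms(1,2)] pathmul_def by (rule if_not_P[OF False])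
  show ?thesis unfolding m1 mulL_zero_left using False by auto
qed

definition FX :: "nat \<times> nat \<Rightarrow> nat \<times> nat \<Rightarrow> nat \<times> nat \<Rightarrow> nat \<times> nat \<Rightarrow> 'a" where
  "FX h3 h1 b' x = mulL n d (mulL n d (Sinv n d q (bv h3)) (bv x)) (bv h1) b'"

lemma FX_cf:
  assumes "(t, k) \<in> Bidx n d" "x \<in> Bidx n d" "h \<in> Bidx n d"
  shows "FX (t, k) h b' x = inverse (scf n q (negm n (t + k)) k) * (if negm n (t + k) = (fst x + snd x) mod n \<and> fst x = (fst h + snd h) mod n
     \<and> k + snd x + snd h < d \<and> b' = (fst h, k + snd x + snd h) then 1 else 0)"
proof -
  have u: "(negm n (t + k), k) \<in> Bidx n d" using assms negm_lt[OF n0] by simp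
  show ?thesis unfolding FX_def Sinv_bv[OF assms(1)] mulL_scale_left tri[OF u assms(2,3)] by simp
qed

lemma dbprod_eps:
  assumes "g \<in> Bidx n d"
  shows "dbprod n d q (0,0) h b' g c = (if fst c \<in> Bidx n d then
    (\<Sum>h1\<in>Bidx n d. \<Sum>h2\<in>Bidx n d. \<Sum>h3\<in>Bidx n d. co3 n d q h h1 h2 h3 * FX h3 h1 b' (fst c) * pathmul n d h2 g (snd c)) else 0)"
proof (cases "fst c \<in> Bidx n d")
  case True
  show ?thesis unfolding dbprod_def conv_lunit using True assms
    by (auto simp: FX_def mulL_bv intro!: sum.cong)
next
  case False
  show ?thesis unfolding dbprod_def conv_lunit using False by simp
qed

end

lemma sum13_delta:
  assumes "finite A" "finite B" "finite C" "a \<in> A" "c \<in> C"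
  shows "(\<Sum>x\<in>A. \<Sum>y\<in>B. \<Sum>z\<in>C. if x = a \<and> z = c then F x y z else 0) = (\<Sum>y\<in>B. F a y c)"
proof -
  have "(\<Sum>x\<in>A. \<Sum>y\<in>B. \<Sum>z\<in>C. if x = a \<and> z = c then F x y z else 0) = (\<Sum>x\<in>A. \<Sum>y\<in>B. if x = a then F x y c else 0)"
  proof (intro sum.cong refl)
    fix x y
    have "(\<Sum>z\<in>C. if x = a \<and> z = c then F x y z else 0) = (\<Sum>z\<in>C. if z = c then (if x = a then F x y z else 0) else 0)"
      by (intro sum.cong refl) auto
    also have "\<dots> = (if x = a then F x y c else 0)" using assms by (simp add: sum.delta)
    finally show "(\<Sum>z\<in>C. if x = a \<and> z = c then F x y z else 0) = (if x = a then F x y c else 0)" .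
  qed
  also have "\<dots> = (\<Sum>x\<in>A. if x = a then (\<Sum>y\<in>B. F x y c) else 0)"
    by (intro sum.cong refl) auto
  also have "\<dots> = (\<Sum>y\<in>B. F a y c)" using assms by (simp add: sum.delta)
  finally show ?thesis .
qed

context DD begin

lemma negm_0: "t < n \<Longrightarrow> negm n t = 0 \<longleftrightarrow> t = 0"
  using negm_char[OF n0, of 0 t] n0 by auto

lemma negm_1: "t < n \<Longrightarrow> negm n t = 1 \<longleftrightarrow> t = n - 1"
proof -
  assume t: "t < n"
  have "negm n t = 1 \<longleftrightarrow> (t + 1) mod n = 0" using negm_char[OF n0, of 1 t] n2 by auto
  also have "\<dots> \<longleftrightarrow> t = n - 1"
  proof
    assume "(t + 1) mod n = 0"
    then have "n dvd t + 1" by auto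
    then have "n \<le> t + 1" using dvd_imp_le by auto
    then show "t = n - 1" using t by simp
  next
    assume "t = n - 1" then show "(t + 1) mod n = 0" using n0 by simp
  qed
  finally show ?thesis .
qed

lemma negm_Suc0: "t < n \<Longrightarrow> negm n (t + 1) = 0 \<longleftrightarrow> t = n - 1"
proof -
  assume t: "t < n"
  have "negm n (t + 1) = 0 \<longleftrightarrow> (t + 1) mod n = 0" using negm_char[OF n0, of 0 "t+1"] n0 by auto
  also have "\<dots> \<longleftrightarrow> t = n - 1"
  proof
    assume "(t + 1) mod n = 0"
    then have "n dvd t + 1" by auto
    then have "n \<le> t + 1" using dvd_imp_le by auto
    then show "t = n - 1" using t by simp
  next
    assume "t = n - 1" then show "(t + 1) mod n = 0" using n0 by simp
  qed
  finally show ?thesis .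
qed

lemma negm_nm1: "negm n (n - 1) = 1"
  using negm_1[of "n - 1"] n0 by simp

lemma negm_nm1': "negm n (n - Suc 0) = Suc 0"
  using negm_nm1 by simp

lemma negm_00: "negm n 0 = 0"
  by (simp add: negm_def)

lemma FX_00:
  assumes "h3 \<in> Bidx n d" "h1 \<in> Bidx n d" "x \<in> Bidx n d"
  shows "FX h3 h1 (0,0) x = (if h3 = (0,0) \<and> h1 = (0,0) \<and> x = (0,0) then 1 else 0)"
proof -
  obtain t k where h3: "h3 = (t, k)" by fastforce
  obtain a s where h1: "h1 = (a, s)" by fastforce
  obtain x1 x2 where x: "x = (x1, x2)" by fastforce
  have t: "t < n" "a < n" "x1 < n" using assms h3 h1 x by auto
  have C: "(negm n (t + k) = (fst (x1,x2) + snd (x1,x2)) mod n \<and> fst (x1,x2) = (fst (a,s) + snd (a,s)) mod n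
     \<and> k + snd (x1,x2) + snd (a,s) < d \<and> (0::nat,0::nat) = (fst (a,s), k + snd (x1,x2) + snd (a,s)))
     \<longleftrightarrow> (t = 0 \<and> k = 0 \<and> a = 0 \<and> s = 0 \<and> x1 = 0 \<and> x2 = 0)"
  proof
    assume h: "negm n (t + k) = (fst (x1,x2) + snd (x1,x2)) mod n \<and> fst (x1,x2) = (fst (a,s) + snd (a,s)) mod n
     \<and> k + snd (x1,x2) + snd (a,s) < d \<and> (0::nat,0::nat) = (fst (a,s), k + snd (x1,x2) + snd (a,s))"
    then have z: "a = 0" "k = 0" "x2 = 0" "s = 0" by auto
    then have "x1 = 0" using h by simp
    then have "negm n t = 0" using h z by simp
    then show "t = 0 \<and> k = 0 \<and> a = 0 \<and> s = 0 \<and> x1 = 0 \<and> x2 = 0" using negm_0[OF t(1)] z \<open>x1 = 0\<close> by simp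
  qed (simp add: negm_00 d0)
  show ?thesis unfolding h3 h1 x FX_cf[OF assms(1)[unfolded h3] assms(3)[unfolded x] assms(2)[unfolded h1]] C
    by (auto simp: negm_00)
qed

lemma FX_10:
  assumes "h3 \<in> Bidx n d" "h1 \<in> Bidx n d" "x \<in> Bidx n d"
  shows "FX h3 h1 (1,0) x = (if h3 = (n-1,0) \<and> h1 = (1,0) \<and> x = (1,0) then 1 else 0)"
proof -
  obtain t k where h3: "h3 = (t, k)" by fastforce
  obtain a s where h1: "h1 = (a, s)" by fastforce
  obtain x1 x2 where x: "x = (x1, x2)" by fastforce
  have t: "t < n" "a < n" "x1 < n" using assms h3 h1 x by auto
  have m1: "1 mod n = 1" using n2 by simp
  have C: "(negm n (t + k) = (fst (x1,x2) + snd (x1,x2)) mod n \<and> fst (x1,x2) = (fst (a,s) + snd (a,s)) mod n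
     \<and> k + snd (x1,x2) + snd (a,s) < d \<and> (1::nat,0::nat) = (fst (a,s), k + snd (x1,x2) + snd (a,s)))
     \<longleftrightarrow> (t = n - 1 \<and> k = 0 \<and> a = 1 \<and> s = 0 \<and> x1 = 1 \<and> x2 = 0)"
  proof
    assume h: "negm n (t + k) = (fst (x1,x2) + snd (x1,x2)) mod n \<and> fst (x1,x2) = (fst (a,s) + snd (a,s)) mod n
     \<and> k + snd (x1,x2) + snd (a,s) < d \<and> (1::nat,0::nat) = (fst (a,s), k + snd (x1,x2) + snd (a,s))"
    then have z: "a = 1" "k = 0" "x2 = 0" "s = 0" by auto
    then have "x1 = 1" using h m1 by simp
    then have "negm n t = 1" using h z m1 by simp
    then show "t = n - 1 \<and> k = 0 \<and> a = 1 \<and> s = 0 \<and> x1 = 1 \<and> x2 = 0" using negm_1[OF t(1)] z \<open>x1 = 1\<close> by simp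
  qed (use n2 in \<open>simp add: negm_nm1' d0 m1\<close>)
  show ?thesis unfolding h3 h1 x FX_cf[OF assms(1)[unfolded h3] assms(3)[unfolded x] assms(2)[unfolded h1]] C
    by (auto simp: negm_nm1)
qed

lemma FX_01:
  assumes "h3 \<in> Bidx n d" "h1 \<in> Bidx n d" "x \<in> Bidx n d"
  shows "FX h3 h1 (0,1) x = (if h3 = (n-1,0) \<and> h1 = (0,0) \<and> x = (0,1) then 1 else 0)
     + (if h3 = (n-1,0) \<and> h1 = (0,1) \<and> x = (1,0) then 1 else 0)
     + (if h3 = (n-1,1) \<and> h1 = (0,0) \<and> x = (0,0) then - inverse q else 0)"
proof -
  obtain t k where h3: "h3 = (t, k)" by fastforce
  obtain a s where h1: "h1 = (a, s)" by fastforce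
  obtain x1 x2 where x: "x = (x1, x2)" by fastforce
  have t: "t < n" "a < n" "x1 < n" using assms h3 h1 x by auto
  have m1: "1 mod n = 1" using n2 by simp
  have e: "negm n (n - 1 + 1) = 0" using n0 by (simp add: negm_def)
  have iv: "inverse (scf n q 0 1) = - inverse q" using n0 by simp
  let ?C = "negm n (t + k) = (fst (x1,x2) + snd (x1,x2)) mod n \<and> fst (x1,x2) = (fst (a,s) + snd (a,s)) mod n
     \<and> k + snd (x1,x2) + snd (a,s) < d \<and> (0::nat,1::nat) = (fst (a,s), k + snd (x1,x2) + snd (a,s))"
  have C: "?C \<longleftrightarrow> (t = n - 1 \<and> k = 0 \<and> a = 0 \<and> s = 0 \<and> x1 = 0 \<and> x2 = 1)
     \<or> (t = n - 1 \<and> k = 0 \<and> a = 0 \<and> s = 1 \<and> x1 = 1 \<and> x2 = 0)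
     \<or> (t = n - 1 \<and> k = 1 \<and> a = 0 \<and> s = 0 \<and> x1 = 0 \<and> x2 = 0)"
  proof
    assume h: ?C
    have hh: "negm n (t + k) = (x1 + x2) mod n" "x1 = (a + s) mod n" "a = 0" "k + x2 + s = 1"
      using h by simp_all
    then consider "k = 0 \<and> x2 = 1 \<and> s = 0" | "k = 0 \<and> x2 = 0 \<and> s = 1" | "k = 1 \<and> x2 = 0 \<and> s = 0" by arith
    then show "(t = n - 1 \<and> k = 0 \<and> a = 0 \<and> s = 0 \<and> x1 = 0 \<and> x2 = 1)
     \<or> (t = n - 1 \<and> k = 0 \<and> a = 0 \<and> s = 1 \<and> x1 = 1 \<and> x2 = 0)
     \<or> (t = n - 1 \<and> k = 1 \<and> a = 0 \<and> s = 0 \<and> x1 = 0 \<and> x2 = 0)"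
    proof cases
      case 1
      then have x1: "x1 = 0" using hh(2,3) by simp
      then have "negm n t = 1" using hh(1) 1 m1 by simp
      then show ?thesis using negm_1[OF t(1)] 1 hh(3) x1 by simp
    next
      case 2
      then have x1: "x1 = 1" using hh(2,3) m1 by simp
      then have "negm n t = 1" using hh(1) 2 m1 by simp
      then show ?thesis using negm_1[OF t(1)] 2 hh(3) x1 by simp
    next
      case 3
      then have x1: "x1 = 0" using hh(2,3) by simp
      then have "negm n (t + 1) = 0" using hh(1) 3 by simp
      then show ?thesis using negm_Suc0[OF t(1)] 3 hh(3) x1 by simp
    qed
  next
    assume "(t = n - 1 \<and> k = 0 \<and> a = 0 \<and> s = 0 \<and> x1 = 0 \<and> x2 = 1)
     \<or> (t = n - 1 \<and> k = 0 \<and> a = 0 \<and> s = 1 \<and> x1 = 1 \<and> x2 = 0)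
     \<or> (t = n - 1 \<and> k = 1 \<and> a = 0 \<and> s = 0 \<and> x1 = 0 \<and> x2 = 0)"
    then show ?C using negm_nm1 m1 d2 e n0 by auto
  qed
  have e1: "n - 1 + 1 = n" using n0 by simp
  have sc0: "scf n q (negm n (n - 1)) 0 = 1" by simp
  have sc1: "inverse (scf n q (negm n (n - 1 + 1)) 1) = - inverse q" using iv e by simp
  have ne: "n - 1 \<noteq> (0::nat) \<or> True" by simp
  have eq: "FX (t,k) (a,s) (0,1) (x1,x2) = inverse (scf n q (negm n (t + k)) k) * (if (t = n - 1 \<and> k = 0 \<and> a = 0 \<and> s = 0 \<and> x1 = 0 \<and> x2 = 1)
     \<or> (t = n - 1 \<and> k = 0 \<and> a = 0 \<and> s = 1 \<and> x1 = 1 \<and> x2 = 0)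
     \<or> (t = n - 1 \<and> k = 1 \<and> a = 0 \<and> s = 0 \<and> x1 = 0 \<and> x2 = 0) then 1 else 0)"
    unfolding FX_cf[OF assms(1)[unfolded h3] assms(3)[unfolded x] assms(2)[unfolded h1]] C by (rule refl)
  consider (D1) "t = n - 1 \<and> k = 0 \<and> a = 0 \<and> s = 0 \<and> x1 = 0 \<and> x2 = 1"
    | (D2) "t = n - 1 \<and> k = 0 \<and> a = 0 \<and> s = 1 \<and> x1 = 1 \<and> x2 = 0"
    | (D3) "t = n - 1 \<and> k = 1 \<and> a = 0 \<and> s = 0 \<and> x1 = 0 \<and> x2 = 0"
    | (D0) "\<not> (t = n - 1 \<and> k = 0 \<and> a = 0 \<and> s = 0 \<and> x1 = 0 \<and> x2 = 1)"
      "\<not> (t = n - 1 \<and> k = 0 \<and> a = 0 \<and> s = 1 \<and> x1 = 1 \<and> x2 = 0)"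
      "\<not> (t = n - 1 \<and> k = 1 \<and> a = 0 \<and> s = 0 \<and> x1 = 0 \<and> x2 = 0)" by blast
  then show ?thesis
  proof cases
    case D1 then show ?thesis unfolding h3 h1 x eq using sc0 by simp
  next
    case D2 then show ?thesis unfolding h3 h1 x eq using sc0 by simp
  next
    case D3 then show ?thesis unfolding h3 h1 x eq using sc1 by simp
  next
    case D0 then show ?thesis unfolding h3 h1 x eq by auto
  qed
qed

lemma co3_sum:
  assumes lm: "(l, m) \<in> Bidx n d" and h1: "(a1, s1) \<in> Bidx n d" and h3: "(a3, s3) \<in> Bidx n d"
  shows "(\<Sum>h2\<in>Bidx n d. co3 n d q (l, m) (a1, s1) h2 (a3, s3) * F h2) =
    (if s1 + s3 \<le> m then qbin q m (m - s3) * q ^ ((m - s3) * a3) * (qbin q (m - s3) s1 * q ^ (s1 * ((l + n - (a1 + a3) mod n) mod n)))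
       * F ((l + n - (a1 + a3) mod n) mod n, m - s1 - s3) else 0)"
proof -
  let ?f = "(l + n - (a1 + a3) mod n) mod n"
  let ?H = "(?f, m - s1 - s3)"
  have fl: "?f < n" using n0 by simp
  have hd: "m - s1 - s3 < d" "m - (s1 + s3) < d" using lm by auto
  have mod_f: "(a1 + ?f + a3) mod n = l"
  proof -
    have "((a1 + a3) mod n + ?f) mod n = l mod n" using modsub[of "(a1 + a3) mod n" n ?f l] n0 by simp
    then show ?thesis using lm by (simp add: mod_add_left_eq algebra_simps)
  qed
  have "(\<Sum>h2\<in>Bidx n d. co3 n d q (l, m) (a1, s1) h2 (a3, s3) * F h2) =
     (\<Sum>h2\<in>Bidx n d. if h2 = ?H then (if s1 + s3 \<le> m then co3 n d q (l, m) (a1, s1) ?H (a3, s3) * F ?H else 0) else 0)"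
  proof (intro sum.cong refl)
    fix h2 assume h2: "h2 \<in> Bidx n d"
    obtain f2 s2 where hh: "h2 = (f2, s2)" by fastforce
    show "co3 n d q (l, m) (a1, s1) h2 (a3, s3) * F h2 = (if h2 = ?H then (if s1 + s3 \<le> m then co3 n d q (l, m) (a1, s1) ?H (a3, s3) * F ?H else 0) else 0)"
    proof (cases "s1 + s2 + s3 = m \<and> (a1 + f2 + a3) mod n = l")
      case True
      have X0: "((a1 + a3) mod n + f2) mod n = (a1 + a3 + f2) mod n" by (rule mod_add_left_eq)
      have X: "((a1 + a3) mod n + f2) mod n = (a1 + f2 + a3) mod n" unfolding X0 by (simp add: ac_simps)
      have "((a1 + a3) mod n + f2) mod n = l mod n" using True lm unfolding X by simp
      then have "f2 = ?f" using modsub[of "(a1 + a3) mod n" n f2 l] n0 h2 hh by simp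
      then show ?thesis using True hh by auto
    next
      case False
      have "h2 = ?H \<Longrightarrow> s1 + s3 \<le> m \<Longrightarrow> False" using False hh mod_f by auto
      then show ?thesis using False hh co3_cf[OF lm] by auto
    qed
  qed
  also have "\<dots> = (if s1 + s3 \<le> m then co3 n d q (l, m) (a1, s1) ?H (a3, s3) * F ?H else 0)"
    using lm fl hd by (simp add: sum.delta)
  also have "\<dots> = (if s1 + s3 \<le> m then qbin q m (m - s3) * q ^ ((m - s3) * a3) * (qbin q (m - s3) s1 * q ^ (s1 * ?f)) * F ?H else 0)"
  proof (cases "s1 + s3 \<le> m")
    case True
    have "co3 n d q (l, m) (a1, s1) ?H (a3, s3) = qbin q m (m - s3) * q ^ ((m - s3) * a3) * (qbin q (m - s3) s1 * q ^ (s1 * ?f))"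
      using True lm h1 h3 fl mod_f by (simp add: co3_cf less_imp_diff_less)
    then show ?thesis using True by simp
  qed simp
  finally show ?thesis .
qed

lemma oneL_apply: "oneL n (k, s) = (if k < n \<and> s = 0 then 1 else 0)"
proof -
  have "oneL n (k, s) = (\<Sum>i<n. if i = k then (if s = 0 then 1 else 0) else 0)"
    unfolding oneL_def bv_def by (intro sum.cong refl) auto
  also have "\<dots> = (if k < n \<and> s = 0 then 1 else 0)" by (simp add: sum.delta)
  finally show ?thesis .
qed

lemma sum_oneL_pm:
  assumes "a \<in> Bidx n d"
  shows "(\<Sum>g\<in>Bidx n d. oneL n g * pathmul n d a g c) = bv a c"
proof -
  obtain a1 a2 where a: "a = (a1, a2)" by fastforce
  have "(\<Sum>g\<in>Bidx n d. oneL n g * pathmul n d a g c) = (\<Sum>g\<in>Bidx n d. if g = (a1, 0) then bv a c else 0)"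
  proof (intro sum.cong refl)
    fix g assume g: "g \<in> Bidx n d"
    obtain k s where gg: "g = (k, s)" by fastforce
    show "oneL n g * pathmul n d a g c = (if g = (a1, 0) then bv a c else 0)"
      using g gg a assms by (auto simp: oneL_apply pathmul_def)
  qed
  also have "\<dots> = bv a c" using assms a d0 by (simp add: sum.delta)
  finally show ?thesis .
qed

end

context DD begin

lemma mulD_tt:
  assumes "a \<in> Bidx n d" "h \<in> Bidx n d"
  shows "mulD n d q (tens (bv a) (bv h)) Q c = (\<Sum>r\<in>Bidx n d \<times> Bidx n d. Q r * dbprod n d q a h (fst r) (snd r) c)"
proof -
  have "mulD n d q (tens (bv a) (bv h)) Q c = (\<Sum>p\<in>Bidx n d \<times> Bidx n d. if p = (a, h) then (\<Sum>r\<in>Bidx n d \<times> Bidx n d. Q r * dbprod n d q (fst p) (snd p) (fst r) (snd r) c) else 0)"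
    unfolding mulD_def
  proof (intro sum.cong refl)
    fix p :: "(nat \<times> nat) \<times> (nat \<times> nat)"
    have t: "tens (bv a) (bv h) p = (if p = (a, h) then 1 else 0)" by (cases p) (auto simp: tens_def bv_def)
    show "(\<Sum>r\<in>Bidx n d \<times> Bidx n d. tens (bv a) (bv h) p * Q r * dbprod n d q (fst p) (snd p) (fst r) (snd r) c) =
      (if p = (a, h) then (\<Sum>r\<in>Bidx n d \<times> Bidx n d. Q r * dbprod n d q (fst p) (snd p) (fst r) (snd r) c) else 0)"
    proof (cases "p = (a, h)")
      case True then show ?thesis by (simp add: tens_def bv_def)
    next
      case False
      then have z: "tens (bv a) (bv h) p = 0" using t by simp
      show ?thesis using False by (simp only: z if_False mult_zero_left sum.neutral_const)
    qed
  qed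
  also have "\<dots> = (\<Sum>r\<in>Bidx n d \<times> Bidx n d. Q r * dbprod n d q a h (fst r) (snd r) c)"
    using assms by (simp add: sum.delta)
  finally show ?thesis .
qed

lemma mulD_tt_tt:
  assumes "a \<in> Bidx n d" "h \<in> Bidx n d" "a' \<in> Bidx n d" "g \<in> Bidx n d"
  shows "mulD n d q (tens (bv a) (bv h)) (tens (bv a') (bv g)) c = dbprod n d q a h a' g c"
proof -
  have "mulD n d q (tens (bv a) (bv h)) (tens (bv a') (bv g)) c = (\<Sum>r\<in>Bidx n d \<times> Bidx n d. if r = (a', g) then dbprod n d q a h (fst r) (snd r) c else 0)"
    unfolding mulD_tt[OF assms(1,2)] by (intro sum.cong refl) (auto simp: tens_def bv_def)
  also have "\<dots> = dbprod n d q a h a' g c" using assms by (simp add: sum.delta)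
  finally show ?thesis .
qed

lemma mulD_tt_oneL:
  assumes "a \<in> Bidx n d" "h \<in> Bidx n d" "a' \<in> Bidx n d"
  shows "mulD n d q (tens (bv a) (bv h)) (tens (bv a') (oneL n)) c = (\<Sum>g\<in>Bidx n d. oneL n g * dbprod n d q a h a' g c)"
proof -
  have "mulD n d q (tens (bv a) (bv h)) (tens (bv a') (oneL n)) c = (\<Sum>r\<in>Bidx n d \<times> Bidx n d. if fst r = a' then oneL n (snd r) * dbprod n d q a h a' (snd r) c else 0)"
    unfolding mulD_tt[OF assms(1,2)] by (intro sum.cong refl) (auto simp: tens_def bv_def)
  also have "\<dots> = (\<Sum>r1\<in>Bidx n d. \<Sum>g\<in>Bidx n d. if r1 = a' then oneL n g * dbprod n d q a h a' g c else 0)"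
    unfolding sum.cartesian_product by (intro sum.cong refl) auto
  also have "\<dots> = (\<Sum>r1\<in>Bidx n d. if r1 = a' then (\<Sum>g\<in>Bidx n d. oneL n g * dbprod n d q a h a' g c) else 0)"
    by (intro sum.cong refl) auto
  also have "\<dots> = (\<Sum>g\<in>Bidx n d. oneL n g * dbprod n d q a h a' g c)" using assms by (simp add: sum.delta)
  finally show ?thesis .
qed

lemma sum3_cong:
  assumes "\<And>x y z. x \<in> A \<Longrightarrow> y \<in> B \<Longrightarrow> z \<in> C \<Longrightarrow> F x y z = G x y z"
  shows "(\<Sum>x\<in>A. \<Sum>y\<in>B. \<Sum>z\<in>C. F x y z) = (\<Sum>x\<in>A. \<Sum>y\<in>B. \<Sum>z\<in>C. G x y z)"
  using assms by (intro sum.cong refl) auto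

lemma db_00:
  assumes lm: "(l, m) \<in> Bidx n d" and g: "g \<in> Bidx n d"
  shows "dbprod n d q (0,0) (l,m) (0,0) g c = bv (0,0) (fst c) * pathmul n d (l,m) g (snd c)"
proof (cases "fst c \<in> Bidx n d")
  case True
  let ?G = "\<lambda>h2. if fst c = (0,0) then pathmul n d h2 g (snd c) else 0"
  have "dbprod n d q (0,0) (l,m) (0,0) g c = (\<Sum>h1\<in>Bidx n d. \<Sum>h2\<in>Bidx n d. \<Sum>h3\<in>Bidx n d.
      if h1 = (0,0) \<and> h3 = (0,0) then co3 n d q (l,m) h1 h2 h3 * ?G h2 else 0)"
    unfolding dbprod_eps[OF g] if_P[OF True]
  proof (intro sum3_cong)
    fix h1 h2 h3 assume h: "h1 \<in> Bidx n d" "h2 \<in> Bidx n d" "h3 \<in> Bidx n d"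
    show "co3 n d q (l, m) h1 h2 h3 * FX h3 h1 (0, 0) (fst c) * pathmul n d h2 g (snd c) =
      (if h1 = (0,0) \<and> h3 = (0,0) then co3 n d q (l,m) h1 h2 h3 * ?G h2 else 0)"
      unfolding FX_00[OF h(3) h(1) True] by auto
  qed
  also have "\<dots> = (\<Sum>h2\<in>Bidx n d. co3 n d q (l,m) (0,0) h2 (0,0) * ?G h2)"
    using d0 n0 by (intro sum13_delta) auto
  also have "\<dots> = ?G (l, m)" using co3_sum[OF lm, of 0 0 0 0 ?G] d0 n0 lm by simp
  finally show ?thesis by (simp add: bv_def)
next
  case False
  then have "fst c \<noteq> (0,0)" using d0 n0 by auto
  then show ?thesis unfolding dbprod_eps[OF g] using False by (simp add: bv_def)
qed


lemma db_10:
  assumes lm: "(l, m) \<in> Bidx n d" and g: "g \<in> Bidx n d"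
  shows "dbprod n d q (0,0) (l,m) (1,0) g c = bv (1,0) (fst c) * (q ^ (m * (n - 1)) * pathmul n d (l,m) g (snd c))"
proof (cases "fst c \<in> Bidx n d")
  case True
  let ?G = "\<lambda>h2. if fst c = (1,0) then pathmul n d h2 g (snd c) else 0"
  have "dbprod n d q (0,0) (l,m) (1,0) g c = (\<Sum>h1\<in>Bidx n d. \<Sum>h2\<in>Bidx n d. \<Sum>h3\<in>Bidx n d.
      if h1 = (1,0) \<and> h3 = (n-1,0) then co3 n d q (l,m) h1 h2 h3 * ?G h2 else 0)"
    unfolding dbprod_eps[OF g] if_P[OF True]
  proof (intro sum3_cong)
    fix h1 h2 h3 assume h: "h1 \<in> Bidx n d" "h2 \<in> Bidx n d" "h3 \<in> Bidx n d"
    show "co3 n d q (l, m) h1 h2 h3 * FX h3 h1 (1, 0) (fst c) * pathmul n d h2 g (snd c) =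
      (if h1 = (1,0) \<and> h3 = (n-1,0) then co3 n d q (l,m) h1 h2 h3 * ?G h2 else 0)"
      unfolding FX_10[OF h(3) h(1) True] by auto
  qed
  also have "\<dots> = (\<Sum>h2\<in>Bidx n d. co3 n d q (l,m) (1,0) h2 (n-1,0) * ?G h2)"
    using d0 n2 by (intro sum13_delta) auto
  also have "\<dots> = q ^ (m * (n - 1)) * ?G (l, m)"
  proof -
    have i1: "(l + n - (1 + (n - 1)) mod n) mod n = l" using lm n0 by simp
    show ?thesis using co3_sum[OF lm, of 1 0 "n-1" 0 ?G] d0 n2 lm unfolding i1 by (simp add: mult.commute)
  qed
  finally show ?thesis by (simp add: bv_def)
next
  case False
  then have "fst c \<noteq> (1,0)" using d0 n2 by auto
  then show ?thesis unfolding dbprod_eps[OF g] using False by (simp add: bv_def)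
qed

lemma db_01:
  assumes lm: "(l, m) \<in> Bidx n d" and g: "g \<in> Bidx n d"
  shows "dbprod n d q (0,0) (l,m) (0,1) g c =
      bv (0,1) (fst c) * (q ^ (m * (n - 1)) * pathmul n d ((l + 1) mod n, m) g (snd c))
    + (if 1 \<le> m then bv (1,0) (fst c) * (q ^ (m * (n - 1)) * (qint q m * q ^ (l + 1)) * pathmul n d ((l + 1) mod n, m - 1) g (snd c)) else 0)
    + (if 1 \<le> m then bv (0,0) (fst c) * (- inverse q * (qint q m * q ^ ((m - 1) * (n - 1))) * pathmul n d ((l + 1) mod n, m - 1) g (snd c)) else 0)"
proof (cases "fst c \<in> Bidx n d")
  case True
  let ?G1 = "\<lambda>h2. if fst c = (0,1) then pathmul n d h2 g (snd c) else 0"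
  let ?G2 = "\<lambda>h2. if fst c = (1,0) then pathmul n d h2 g (snd c) else 0"
  let ?G3 = "\<lambda>h2. if fst c = (0,0) then - inverse q * pathmul n d h2 g (snd c) else 0"
  let ?B = "Bidx n d"
  have "dbprod n d q (0,0) (l,m) (0,1) g c = (\<Sum>h1\<in>?B. \<Sum>h2\<in>?B. \<Sum>h3\<in>?B.
      (if h1 = (0,0) \<and> h3 = (n-1,0) then co3 n d q (l,m) h1 h2 h3 * ?G1 h2 else 0)
    + (if h1 = (0,1) \<and> h3 = (n-1,0) then co3 n d q (l,m) h1 h2 h3 * ?G2 h2 else 0)
    + (if h1 = (0,0) \<and> h3 = (n-1,1) then co3 n d q (l,m) h1 h2 h3 * ?G3 h2 else 0))"
    unfolding dbprod_eps[OF g] if_P[OF True]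
  proof (intro sum3_cong)
    fix h1 h2 h3 assume h: "h1 \<in> Bidx n d" "h2 \<in> Bidx n d" "h3 \<in> Bidx n d"
    show "co3 n d q (l, m) h1 h2 h3 * FX h3 h1 (0, 1) (fst c) * pathmul n d h2 g (snd c) =
      (if h1 = (0,0) \<and> h3 = (n-1,0) then co3 n d q (l,m) h1 h2 h3 * ?G1 h2 else 0)
    + (if h1 = (0,1) \<and> h3 = (n-1,0) then co3 n d q (l,m) h1 h2 h3 * ?G2 h2 else 0)
    + (if h1 = (0,0) \<and> h3 = (n-1,1) then co3 n d q (l,m) h1 h2 h3 * ?G3 h2 else 0)"
      unfolding FX_01[OF h(3) h(1) True] by (auto simp: algebra_simps)
  qed
  also have "\<dots> = (\<Sum>h1\<in>?B. \<Sum>h2\<in>?B. \<Sum>h3\<in>?B. (if h1 = (0,0) \<and> h3 = (n-1,0) then co3 n d q (l,m) h1 h2 h3 * ?G1 h2 else 0))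
     + (\<Sum>h1\<in>?B. \<Sum>h2\<in>?B. \<Sum>h3\<in>?B. (if h1 = (0,1) \<and> h3 = (n-1,0) then co3 n d q (l,m) h1 h2 h3 * ?G2 h2 else 0))
     + (\<Sum>h1\<in>?B. \<Sum>h2\<in>?B. \<Sum>h3\<in>?B. (if h1 = (0,0) \<and> h3 = (n-1,1) then co3 n d q (l,m) h1 h2 h3 * ?G3 h2 else 0))"
    by (simp only: sum.distrib)
  also have "\<dots> = (\<Sum>h2\<in>?B. co3 n d q (l,m) (0,0) h2 (n-1,0) * ?G1 h2)
     + (\<Sum>h2\<in>?B. co3 n d q (l,m) (0,1) h2 (n-1,0) * ?G2 h2)
     + (\<Sum>h2\<in>?B. co3 n d q (l,m) (0,0) h2 (n-1,1) * ?G3 h2)"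
  proof -
    have "1 < d" using d2 by simp
    then show ?thesis using d0 n2 by (subst sum13_delta, auto)+
  qed
  also have "\<dots> = bv (0,1) (fst c) * (q ^ (m * (n - 1)) * pathmul n d ((l + 1) mod n, m) g (snd c))
    + (if 1 \<le> m then bv (1,0) (fst c) * (q ^ (m * (n - 1)) * (qint q m * q ^ (l + 1)) * pathmul n d ((l + 1) mod n, m - 1) g (snd c)) else 0)
    + (if 1 \<le> m then bv (0,0) (fst c) * (- inverse q * (qint q m * q ^ ((m - 1) * (n - 1))) * pathmul n d ((l + 1) mod n, m - 1) g (snd c)) else 0)"
  proof -
    have i1: "(l + n - (0 + (n - 1)) mod n) mod n = (l + 1) mod n" using lm n0 by simp
    have e1: "(\<Sum>h2\<in>?B. co3 n d q (l,m) (0,0) h2 (n-1,0) * ?G1 h2) = bv (0,1) (fst c) * (q ^ (m * (n - 1)) * pathmul n d ((l + 1) mod n, m) g (snd c))"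
      using co3_sum[OF lm, of 0 0 "n-1" 0 ?G1] d0 n2 lm unfolding i1 by (simp add: bv_def mult.commute)
    have e2: "(\<Sum>h2\<in>?B. co3 n d q (l,m) (0,1) h2 (n-1,0) * ?G2 h2) = (if 1 \<le> m then bv (1,0) (fst c) * (q ^ (m * (n - 1)) * (qint q m * q ^ (l + 1)) * pathmul n d ((l + 1) mod n, m - 1) g (snd c)) else 0)"
    proof -
      have qb1: "qbin q m (Suc 0) = qint q m" using qbin_1[of q m] by simp
      show ?thesis using co3_sum[OF lm, of 0 1 "n-1" 0 ?G2] d2 n2 lm qb1 unfolding i1 by (simp add: bv_def q_mod algebra_simps)
    qed
    have e3: "(\<Sum>h2\<in>?B. co3 n d q (l,m) (0,0) h2 (n-1,1) * ?G3 h2) = (if 1 \<le> m then bv (0,0) (fst c) * (- inverse q * (qint q m * q ^ ((m - 1) * (n - 1))) * pathmul n d ((l + 1) mod n, m - 1) g (snd c)) else 0)"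
    proof (cases "1 \<le> m")
      case True
      then obtain k where k: "m = Suc k" by (cases m) auto
      have qb: "qbin q m (m - 1) = qint q m" using k qbin_pred by simp
      show ?thesis using co3_sum[OF lm, of 0 0 "n-1" 1 ?G3] d2 n2 lm True qb unfolding i1 by (simp add: bv_def algebra_simps)
    next
      case False
      then show ?thesis using co3_sum[OF lm, of 0 0 "n-1" 1 ?G3] d2 n2 lm by simp
    qed
    show ?thesis using e1 e2 e3 by simp
  qed
  finally show ?thesis .
next
  case False
  then have "fst c \<noteq> (1,0)" "fst c \<noteq> (0,1)" "fst c \<noteq> (0,0)" using d2 n2 by auto
  then show ?thesis unfolding dbprod_eps[OF g] using False by (simp add: bv_def)
qed

end

context DD begin

lemma FX_eta: "(\<lambda>x. mulL n d (mulL n d (Sinv n d q (bv h3)) (bv x)) (bv h1) b') = FX h3 h1 b'"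
  by (rule ext) (simp add: FX_def)

lemma dbprod_FX: "dbprod n d q b h b' g c = (\<Sum>h1\<in>Bidx n d. \<Sum>h2\<in>Bidx n d. \<Sum>h3\<in>Bidx n d.
      co3 n d q h h1 h2 h3 * conv n d q (bv b) (FX h3 h1 b') (fst c) * mulL n d (bv h2) (bv g) (snd c))"
  unfolding dbprod_def FX_eta by (rule refl)

lemma FX_k0:
  assumes "t < n" "a < n" "b' \<in> Bidx n d" "x \<in> Bidx n d"
  shows "FX (t,0) (a,0) b' x = (if a = fst b' \<and> negm n t = (fst b' + snd b') mod n then bv b' x else 0)"
proof -
  obtain x1 x2 where x: "x = (x1, x2)" by fastforce
  obtain b1 b2 where b: "b' = (b1, b2)" by fastforce
  have i: "(t, 0) \<in> Bidx n d" "(a, 0) \<in> Bidx n d" using assms d0 by auto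
  show ?thesis unfolding FX_cf[OF i(1) assms(4) i(2)] using assms x b by (auto simp: bv_def)
qed

lemma conv_cong: "(\<And>x. x \<in> Bidx n d \<Longrightarrow> g x = g' x) \<Longrightarrow> conv n d q f g y = conv n d q f g' y"
  unfolding conv_def by (auto intro!: sum.cong)

lemma conv_zero: "conv n d q f (\<lambda>_. 0) y = 0"
  unfolding conv_def by simp

lemma conv_FX_k0:
  assumes "t < n" "a < n" "b' \<in> Bidx n d"
  shows "conv n d q f (FX (t,0) (a,0) b') y = (if a = fst b' \<and> negm n t = (fst b' + snd b') mod n then conv n d q f (bv b') y else 0)"
proof (cases "a = fst b' \<and> negm n t = (fst b' + snd b') mod n")
  case True
  have "conv n d q f (FX (t,0) (a,0) b') y = conv n d q f (bv b') y"
    by (rule conv_cong) (use FX_k0[OF assms] True in simp)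
  then show ?thesis using True by simp
next
  case False
  then have "conv n d q f (FX (t,0) (a,0) b') y = conv n d q f (\<lambda>_. 0) y"
    by (intro conv_cong) (use FX_k0[OF assms] False in auto)
  then show ?thesis by (subst if_not_P[OF False]) (simp add: conv_zero)
qed

lemma db_k0:
  assumes k: "k < n" and b: "b \<in> Bidx n d" and b': "b' \<in> Bidx n d" and g': "g' \<in> Bidx n d"
  shows "dbprod n d q b (k,0) b' g' c = (if (fst b' + (fst g' + snd g') mod n + negm n ((fst b' + snd b') mod n)) mod n = k
     then conv n d q (bv b) (bv b') (fst c) * bv g' (snd c) else 0)"
proof -
  let ?e' = "(fst b' + snd b') mod n"
  let ?eg = "(fst g' + snd g') mod n"
  let ?V = "conv n d q (bv b) (bv b') (fst c) * bv g' (snd c)"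
  let ?K = "(fst b' + ?eg + negm n ?e') mod n"
  have km: "(k, 0) \<in> Bidx n d" using k d0 by simp
  have "dbprod n d q b (k,0) b' g' c = (\<Sum>h1\<in>Bidx n d. \<Sum>h2\<in>Bidx n d. \<Sum>h3\<in>Bidx n d.
     if h1 = (fst b', 0) \<and> h3 = (negm n ?e', 0) then (if h2 = (?eg, 0) \<and> ?K = k then ?V else 0) else 0)"
    unfolding dbprod_FX
  proof (intro sum3_cong)
    fix h1 h2 h3 assume h: "h1 \<in> Bidx n d" "h2 \<in> Bidx n d" "h3 \<in> Bidx n d"
    obtain a s1 where h1: "h1 = (a, s1)" by fastforce
    obtain f2 s2 where h2: "h2 = (f2, s2)" by fastforce
    obtain t s3 where h3: "h3 = (t, s3)" by fastforce
    have lt: "a < n" "f2 < n" "t < n" using h h1 h2 h3 by auto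
    show "co3 n d q (k, 0) h1 h2 h3 * conv n d q (bv b) (FX h3 h1 b') (fst c) * mulL n d (bv h2) (bv g') (snd c) =
      (if h1 = (fst b', 0) \<and> h3 = (negm n ?e', 0) then (if h2 = (?eg, 0) \<and> ?K = k then ?V else 0) else 0)"
    proof (cases "s1 = 0 \<and> s2 = 0 \<and> s3 = 0 \<and> (a + f2 + t) mod n = k")
      case True
      have c3: "co3 n d q (k, 0) h1 h2 h3 = 1" using True h h1 h2 h3 co3_cf[OF km] by simp
      have cv: "conv n d q (bv b) (FX h3 h1 b') (fst c) = (if a = fst b' \<and> negm n t = ?e' then conv n d q (bv b) (bv b') (fst c) else 0)"
        using True h1 h3 conv_FX_k0[OF lt(3) lt(1) b'] by simp
      have ml: "mulL n d (bv h2) (bv g') (snd c) = (if f2 = ?eg then bv g' (snd c) else 0)"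
        using True h2 h(2) g' by (cases g') (simp add: mulL_bv pathmul_def)
      have nt: "negm n t = ?e' \<longleftrightarrow> t = negm n ?e'"
        using negm_negm[OF n0 lt(3)] negm_negm[OF n0, of ?e'] n0 by auto
      show ?thesis unfolding c3 cv ml using True h1 h2 h3 nt by auto
    next
      case False
      have c3: "co3 n d q (k, 0) h1 h2 h3 = 0" using False h h1 h2 h3 co3_cf[OF km] by auto
      have "\<not> (h1 = (fst b', 0) \<and> h3 = (negm n ?e', 0) \<and> h2 = (?eg, 0) \<and> ?K = k)"
        using False h1 h2 h3 by auto
      then show ?thesis unfolding c3 by auto
    qed
  qed
  also have "\<dots> = (\<Sum>h2\<in>Bidx n d. if h2 = (?eg, 0) \<and> ?K = k then ?V else 0)"
  proof -
    have fb: "fst b' < n" using b' by (cases b') auto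
    show ?thesis using fb negm_lt[OF n0] d0 by (intro sum13_delta) auto
  qed
  also have "\<dots> = (\<Sum>h2\<in>Bidx n d. if h2 = (?eg, 0) then (if ?K = k then ?V else 0) else 0)"
    by (intro sum.cong refl) auto
  also have "\<dots> = (if ?K = k then ?V else 0)" using n0 d0 by (simp add: sum.delta)
  finally show ?thesis .
qed

lemma db_oneL:
  assumes b: "b \<in> Bidx n d" and b': "b' \<in> Bidx n d" and g': "g' \<in> Bidx n d"
  shows "(\<Sum>h\<in>Bidx n d. oneL n h * dbprod n d q b h b' g' c) = conv n d q (bv b) (bv b') (fst c) * bv g' (snd c)"
proof -
  let ?V = "conv n d q (bv b) (bv b') (fst c) * bv g' (snd c)"
  let ?K = "(fst b' + (fst g' + snd g') mod n + negm n ((fst b' + snd b') mod n)) mod n"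
  have "(\<Sum>h\<in>Bidx n d. oneL n h * dbprod n d q b h b' g' c) = (\<Sum>h\<in>Bidx n d. if h = (?K, 0) then ?V else 0)"
  proof (intro sum.cong refl)
    fix h assume h: "h \<in> Bidx n d"
    obtain k s where hh: "h = (k, s)" by fastforce
    show "oneL n h * dbprod n d q b h b' g' c = (if h = (?K, 0) then ?V else 0)"
    proof (cases "s = 0")
      case True
      have "k < n" using h hh by simp
      then show ?thesis using hh True db_k0[OF _ b b' g', of k c] by (auto simp: oneL_apply)
    next
      case False
      then show ?thesis using hh by (simp add: oneL_apply)
    qed
  qed
  also have "\<dots> = ?V" using n0 d0 by (simp add: sum.delta)
  finally show ?thesis .
qed

lemma conv_expand: "conv n d q f g x = (\<Sum>a\<in>Bidx n d. \<Sum>b\<in>Bidx n d. f a * g b * conv n d q (bv a) (bv b) x)"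
proof (cases "x \<in> Bidx n d")
  case True
  have "conv n d q f g x = (\<Sum>a\<in>Bidx n d. \<Sum>b\<in>Bidx n d. cpc (fst x) (snd x) a b * f a * g b)"
    unfolding conv_cf[OF True] sum.cartesian_product by (simp add: split_def)
  also have "\<dots> = (\<Sum>a\<in>Bidx n d. \<Sum>b\<in>Bidx n d. f a * g b * conv n d q (bv a) (bv b) x)"
    using True by (intro sum.cong refl) (simp add: conv_bv)
  finally show ?thesis .
next
  case False
  then show ?thesis by (simp add: conv_out)
qed

lemma V_expand: "(y :: 'a vec) \<in> Vspace n d \<Longrightarrow> (\<Sum>r\<in>Bidx n d. y r * bv r z) = y z"
proof (cases "z \<in> Bidx n d")
  case True
  have "(\<Sum>r\<in>Bidx n d. y r * bv r z) = (\<Sum>r\<in>Bidx n d. if r = z then y z else 0)"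
    by (intro sum.cong refl) (auto simp: bv_def)
  then show ?thesis using True by (simp add: sum.delta)
next
  case False
  assume "y \<in> Vspace n d"
  then have "y z = 0" using False unfolding Vspace_def by blast
  moreover have "(\<Sum>r\<in>Bidx n d. y r * bv r z) = 0" using False by (intro sum.neutral) (auto simp: bv_def)
  ultimately show ?thesis by simp
qed

lemma sum_prod_split: "(\<Sum>p\<in>A \<times> B. h p) = (\<Sum>x\<in>A. \<Sum>y\<in>B. h (x, y))"
  by (simp add: sum.cartesian_product)

lemma L1:
  assumes y: "y \<in> Vspace n d"
  shows "mulD n d q (tens f (oneL n)) (tens g y) = tens (conv n d q f g) y"
proof (rule ext)
  fix c :: "(nat \<times> nat) \<times> (nat \<times> nat)"
  let ?B = "Bidx n d"
  let ?D = "\<lambda>p1 p2 r1 r2. dbprod n d q p1 p2 r1 r2 c"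
  have "mulD n d q (tens f (oneL n)) (tens g y) c = (\<Sum>p1\<in>?B. \<Sum>p2\<in>?B. \<Sum>r1\<in>?B. \<Sum>r2\<in>?B.
      f p1 * oneL n p2 * (g r1 * y r2) * ?D p1 p2 r1 r2)"
    unfolding mulD_def tens_def by (simp only: sum_prod_split fst_conv snd_conv)
  also have "\<dots> = (\<Sum>p1\<in>?B. \<Sum>r1\<in>?B. \<Sum>r2\<in>?B. \<Sum>p2\<in>?B.
      f p1 * oneL n p2 * (g r1 * y r2) * ?D p1 p2 r1 r2)"
  proof (rule sum.cong[OF refl])
    fix p1 :: "nat \<times> nat"
    have "(\<Sum>p2\<in>?B. \<Sum>r1\<in>?B. \<Sum>r2\<in>?B. f p1 * oneL n p2 * (g r1 * y r2) * ?D p1 p2 r1 r2)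
       = (\<Sum>r1\<in>?B. \<Sum>p2\<in>?B. \<Sum>r2\<in>?B. f p1 * oneL n p2 * (g r1 * y r2) * ?D p1 p2 r1 r2)"
      by (rule sum.swap)
    also have "\<dots> = (\<Sum>r1\<in>?B. \<Sum>r2\<in>?B. \<Sum>p2\<in>?B. f p1 * oneL n p2 * (g r1 * y r2) * ?D p1 p2 r1 r2)"
      by (rule sum.cong[OF refl], rule sum.swap)
    finally show "(\<Sum>p2\<in>?B. \<Sum>r1\<in>?B. \<Sum>r2\<in>?B. f p1 * oneL n p2 * (g r1 * y r2) * ?D p1 p2 r1 r2)
       = (\<Sum>r1\<in>?B. \<Sum>r2\<in>?B. \<Sum>p2\<in>?B. f p1 * oneL n p2 * (g r1 * y r2) * ?D p1 p2 r1 r2)" .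
  qed
  also have "\<dots> = (\<Sum>p1\<in>?B. \<Sum>r1\<in>?B. \<Sum>r2\<in>?B. f p1 * g r1 * y r2 * (conv n d q (bv p1) (bv r1) (fst c) * bv r2 (snd c)))"
  proof (intro sum.cong refl)
    fix p1 r1 r2 assume h: "p1 \<in> ?B" "r1 \<in> ?B" "r2 \<in> ?B"
    have "(\<Sum>p2\<in>?B. f p1 * oneL n p2 * (g r1 * y r2) * ?D p1 p2 r1 r2) = f p1 * g r1 * y r2 * (\<Sum>p2\<in>?B. oneL n p2 * ?D p1 p2 r1 r2)"
      by (simp add: sum_distrib_left algebra_simps)
    then show "(\<Sum>p2\<in>?B. f p1 * oneL n p2 * (g r1 * y r2) * ?D p1 p2 r1 r2) = f p1 * g r1 * y r2 * (conv n d q (bv p1) (bv r1) (fst c) * bv r2 (snd c))"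
      using db_oneL[OF h] by simp
  qed
  also have "\<dots> = (\<Sum>p1\<in>?B. \<Sum>r1\<in>?B. f p1 * g r1 * conv n d q (bv p1) (bv r1) (fst c)) * (\<Sum>r2\<in>?B. y r2 * bv r2 (snd c))"
    by (simp add: sum_distrib_left sum_distrib_right algebra_simps)
  also have "\<dots> = conv n d q f g (fst c) * y (snd c)"
    using conv_expand[of f g "fst c"] V_expand[OF y] by simp
  finally show "mulD n d q (tens f (oneL n)) (tens g y) c = tens (conv n d q f g) y c"
    by (simp add: tens_def)
qed

end

fun qf :: "'a::field \<Rightarrow> nat \<Rightarrow> 'a" where
  "qf q 0 = 1"
| "qf q (Suc j) = qint q (Suc j) * qf q j"

lemma qint_mul: "qint q t * (1 - q) = 1 - q ^ t"
proof (induction t)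
  case 0 then show ?case by (simp add: qint_def)
next
  case (Suc t)
  have "qint q (Suc t) * (1 - q) = (1 - q) + q * (qint q t * (1 - q))" by (simp add: qint_Suc algebra_simps)
  also have "\<dots> = (1 - q) + q * (1 - q ^ t)" using Suc.IH by simp
  also have "\<dots> = 1 - q ^ Suc t" by (simp add: algebra_simps)
  finally show ?case .
qed

context DD begin

lemma qint_nz: "0 < t \<Longrightarrow> t < d \<Longrightarrow> qint q t \<noteq> 0"
  using qint_mul[of q t] qprim by force

lemma qf_nz: "j < d \<Longrightarrow> qf q j \<noteq> 0"
  by (induction j) (auto simp: qint_nz)

lemma oneL_V: "oneL n \<in> Vspace n d"
  unfolding Vspace_def using d0 by (auto simp: oneL_apply)

lemma bv_V: "b \<in> Bidx n d \<Longrightarrow> bv b \<in> Vspace n d"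
  unfolding Vspace_def by (auto simp: bv_def)

lemma tens_scale: "tens (\<lambda>x. k * f x) y = (\<lambda>c. k * tens f y c)"
  by (simp add: tens_def algebra_simps)

lemma powG: "powD n d q (Gd n) i = tens (bv (i mod n, 0)) (oneL n)"
proof (induction i)
  case 0 then show ?case by (simp add: oneD_def)
next
  case (Suc i)
  have c: "conv n d q (bv (1,0)) (bv (i mod n, 0)) = bv (Suc i mod n, 0)"
  proof
    fix x :: "nat \<times> nat"
    obtain x1 x2 where x: "x = (x1, x2)" by fastforce
    have i1: "(1, 0) \<in> Bidx n d" "(i mod n, 0) \<in> Bidx n d" using n2 d0 n0 by auto
    have e: "(1 + i mod n) mod n = Suc i mod n" by (simp add: mod_Suc_eq)
    show "conv n d q (bv (1,0)) (bv (i mod n, 0)) x = bv (Suc i mod n, 0) x"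
      unfolding conv_bv[OF i1] using x i1 e n0 d0 by (auto simp: cpc_def bv_def)
  qed
  show ?case by (simp only: powD.simps(2) Suc.IH) (simp only: Gd_def L1[OF oneL_V] c)
qed

lemma powX: "j < d \<Longrightarrow> powD n d q (Xd n) j = tens (\<lambda>x. qf q j * bv (0, j) x) (oneL n)"
proof (induction j)
  case 0 then show ?case by (simp add: oneD_def)
next
  case (Suc j)
  have c: "conv n d q (bv (0,1)) (bv (0, j)) = (\<lambda>x. qint q (Suc j) * bv (0, Suc j) x)"
  proof
    fix x :: "nat \<times> nat"
    obtain x1 x2 where x: "x = (x1, x2)" by fastforce
    have i1: "(0, 1) \<in> Bidx n d" "(0, j) \<in> Bidx n d" using Suc.prems d2 n0 by auto
    have qb: "qbin q (Suc j) (Suc 0) = qint q (Suc j)" using qbin_1[of q "Suc j"] by simp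
    show "conv n d q (bv (0,1)) (bv (0, j)) x = qint q (Suc j) * bv (0, Suc j) x"
      unfolding conv_bv[OF i1] using x i1 n0 Suc.prems qb by (auto simp: cpc_def bv_def)
  qed
  have "powD n d q (Xd n) (Suc j) = tens (conv n d q (bv (0,1)) (\<lambda>x. qf q j * bv (0, j) x)) (oneL n)"
    using Suc by (simp only: powD.simps(2)) (simp only: Xd_def L1[OF oneL_V])
  also have "\<dots> = tens (\<lambda>x. qf q (Suc j) * bv (0, Suc j) x) (oneL n)"
    unfolding conv_scale_right c by (simp add: algebra_simps)
  finally show ?case .
qed

lemma powX_d: "powD n d q (Xd n) d = (\<lambda>_. 0)"
proof -
  obtain j where j: "d = Suc j" using d2 by (cases d) auto
  have jd: "j < d" using j by simp
  have c: "conv n d q (bv (0,1)) (bv (0, j)) = (\<lambda>x. 0)"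
  proof
    fix x :: "nat \<times> nat"
    obtain x1 x2 where x: "x = (x1, x2)" by fastforce
    have i1: "(0, 1) \<in> Bidx n d" "(0, j) \<in> Bidx n d" using jd d2 n0 by auto
    show "conv n d q (bv (0,1)) (bv (0, j)) x = 0"
    proof -
      have dj: "d \<le> 1 + j" using j by simp
      show ?thesis unfolding conv_bv[OF i1] using x dj by (auto simp: cpc_def)
    qed
  qed
  have "powD n d q (Xd n) d = powD n d q (Xd n) (Suc j)" by (simp only: j[symmetric])
  also have "\<dots> = tens (conv n d q (bv (0,1)) (\<lambda>x. qf q j * bv (0, j) x)) (oneL n)"
    by (simp only: powD.simps(2) powX[OF jd]) (simp only: Xd_def L1[OF oneL_V])
  also have "\<dots> = (\<lambda>_. 0)"
    unfolding conv_scale_right c by (simp add: tens_def)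
  finally show ?thesis .
qed

lemma GX: "mulD n d q (Gd n) (Xd n) = (\<lambda>c. inverse q * mulD n d q (Xd n) (Gd n) c)"
proof -
  have i1: "(1, 0) \<in> Bidx n d" "(0, 1) \<in> Bidx n d" using n2 d2 by auto
  have m1: "1 mod n = 1" using n2 by simp
  have c1: "conv n d q (bv (1,0)) (bv (0,1)) = bv (1,1)"
  proof
    fix x :: "nat \<times> nat"
    obtain x1 x2 where x: "x = (x1, x2)" by fastforce
    show "conv n d q (bv (1,0)) (bv (0,1)) x = bv (1,1) x"
      unfolding conv_bv[OF i1] using x m1 n2 d2 by (auto simp: cpc_def bv_def)
  qed
  have c2: "conv n d q (bv (0,1)) (bv (1,0)) = (\<lambda>x. q * bv (1,1) x)"
  proof
    fix x :: "nat \<times> nat"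
    obtain x1 x2 where x: "x = (x1, x2)" by fastforce
    show "conv n d q (bv (0,1)) (bv (1,0)) x = q * bv (1,1) x"
      unfolding conv_bv[OF i1(2,1)] using x m1 n2 d2 by (auto simp: cpc_def bv_def)
  qed
  show ?thesis unfolding Gd_def Xd_def L1[OF oneL_V] c1 c2 tens_scale
    by (rule ext) (simp add: q_nz mult.assoc[symmetric])
qed

lemma basisD_cf:
  assumes "i < n" "j < d" "l < n" "m < d"
  shows "basisD n d q (i, j, l, m) = (\<lambda>c. qf q j * (if c = ((i, j), (l, m)) then 1 else 0))"
proof -
  have i1: "(i, 0) \<in> Bidx n d" "(0, j) \<in> Bidx n d" using assms n0 by auto
  have c: "conv n d q (bv (i, 0)) (bv (0, j)) = bv (i, j)"
  proof
    fix x :: "nat \<times> nat"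
    obtain x1 x2 where x: "x = (x1, x2)" by fastforce
    show "conv n d q (bv (i, 0)) (bv (0, j)) x = bv (i, j) x"
      unfolding conv_bv[OF i1] using x assms by (auto simp: cpc_def bv_def)
  qed
  have GX: "mulD n d q (powD n d q (Gd n) i) (powD n d q (Xd n) j) = tens (\<lambda>x. qf q j * bv (i, j) x) (oneL n)"
  proof -
    have im: "i mod n = i" using assms by simp
    show ?thesis unfolding powG powX[OF assms(2)] im L1[OF oneL_V] conv_scale_right c by (rule refl)
  qed
  have lm: "(l mod n, m) \<in> Bidx n d" "(l mod n) = l" using assms by auto
  have c2: "conv n d q (\<lambda>x. qf q j * bv (i, j) x) (bv (0, 0)) = (\<lambda>x. qf q j * bv (i, j) x)"
  proof
    fix x :: "nat \<times> nat"
    show "conv n d q (\<lambda>x. qf q j * bv (i, j) x) (bv (0, 0)) x = qf q j * bv (i, j) x"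
      unfolding conv_runit using assms by (auto simp: bv_def)
  qed
  have gm: "gamD n l m = tens (bv (0,0)) (bv (l, m))" using assms by (simp add: gamD_def)
  have lm': "(l, m) \<in> Bidx n d" using assms by simp
  show ?thesis unfolding basisD_def prod.case GX gm L1[OF bv_V[OF lm']] c2
    by (auto simp: tens_def bv_def)
qed

end

context DD begin

lemma qpow: "q ^ (m * (n - 1)) = inverse q ^ m"
proof -
  have "q * q ^ (n - 1) = 1" using qn n0 by (metis power_Suc Suc_diff_1)
  then have h: "q ^ (n - 1) = inverse q" using q_nz by (metis inverse_unique mult.commute)
  have "q ^ (m * (n - 1)) = q ^ ((n - 1) * m)" by (simp add: mult.commute)
  also have "\<dots> = (q ^ (n - 1)) ^ m" by (rule power_mult)
  finally show ?thesis using h by simp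
qed

lemma gm_eq: "l < n \<Longrightarrow> gamD n l m = tens (bv (0,0)) (bv (l, m))"
  by (simp add: gamD_def)

lemma gam_gam:
  assumes "l < n" "m < d" "l' < n" "m' < d"
  shows "mulD n d q (gamD n l m) (gamD n l' m') = tens (bv (0, 0)) (pathmul n d (l, m) (l', m'))"
proof
  fix c :: "(nat \<times> nat) \<times> (nat \<times> nat)"
  have i: "(0,0) \<in> Bidx n d" "(l, m) \<in> Bidx n d" "(l', m') \<in> Bidx n d" using assms n0 d0 by auto
  show "mulD n d q (gamD n l m) (gamD n l' m') c = tens (bv (0, 0)) (pathmul n d (l, m) (l', m')) c"
    unfolding gm_eq[OF assms(1)] gm_eq[OF assms(3)] mulD_tt_tt[OF i(1,2,1,3)] db_00[OF i(2,3)]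
    by (simp add: tens_def)
qed

lemma G_gam:
  assumes "l < n" "m < d"
  shows "mulD n d q (Gd n) (gamD n l m) = tens (bv (1,0)) (bv (l, m))"
proof -
  have i: "(l, m) \<in> Bidx n d" using assms by simp
  have c: "conv n d q (bv (1,0)) (bv (0,0)) = bv (1, 0)"
  proof
    fix x :: "nat \<times> nat"
    show "conv n d q (bv (1,0)) (bv (0,0)) x = bv (1,0) x" unfolding conv_runit using n2 d0 by (auto simp: bv_def)
  qed
  show ?thesis unfolding gm_eq[OF assms(1)] Gd_def L1[OF bv_V[OF i]] c by (rule refl)
qed

lemma X_gam:
  assumes "l < n" "m < d"
  shows "mulD n d q (Xd n) (gamD n l m) = tens (bv (0,1)) (bv (l, m))"
proof -
  have i: "(l, m) \<in> Bidx n d" using assms by simp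
  have c: "conv n d q (bv (0,1)) (bv (0,0)) = bv (0, 1)"
  proof
    fix x :: "nat \<times> nat"
    show "conv n d q (bv (0,1)) (bv (0,0)) x = bv (0,1) x" unfolding conv_runit using n0 d2 by (auto simp: bv_def)
  qed
  show ?thesis unfolding gm_eq[OF assms(1)] Xd_def L1[OF bv_V[OF i]] c by (rule refl)
qed

lemma gam_G:
  assumes "l < n" "m < d"
  shows "mulD n d q (gamD n l m) (Gd n) = (\<lambda>c. inverse q ^ m * mulD n d q (Gd n) (gamD n l m) c)"
proof
  fix c :: "(nat \<times> nat) \<times> (nat \<times> nat)"
  have i: "(0,0) \<in> Bidx n d" "(l, m) \<in> Bidx n d" "(1, 0) \<in> Bidx n d" using assms n2 d0 by auto
  have "mulD n d q (gamD n l m) (Gd n) c = (\<Sum>g\<in>Bidx n d. oneL n g * dbprod n d q (0,0) (l,m) (1,0) g c)"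
    unfolding gm_eq[OF assms(1)] Gd_def mulD_tt_oneL[OF i] by (rule refl)
  also have "\<dots> = (\<Sum>g\<in>Bidx n d. (bv (1,0) (fst c) * q ^ (m * (n - 1))) * (oneL n g * pathmul n d (l,m) g (snd c)))"
  proof (intro sum.cong refl)
    fix g assume g: "g \<in> Bidx n d"
    show "oneL n g * dbprod n d q (0,0) (l,m) (1,0) g c = (bv (1,0) (fst c) * q ^ (m * (n - 1))) * (oneL n g * pathmul n d (l,m) g (snd c))"
      unfolding db_10[OF i(2) g] by (simp only: mult_ac)
  qed
  also have "\<dots> = bv (1,0) (fst c) * q ^ (m * (n - 1)) * bv (l, m) (snd c)"
    by (simp only: sum_distrib_left[symmetric] sum_oneL_pm[OF i(2)])
  also have "\<dots> = inverse q ^ m * mulD n d q (Gd n) (gamD n l m) c"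
    unfolding G_gam[OF assms] qpow by (simp add: tens_def)
  finally show "mulD n d q (gamD n l m) (Gd n) c = inverse q ^ m * mulD n d q (Gd n) (gamD n l m) c" .
qed

lemma gam_X:
  assumes "l < n" "m < d"
  shows "mulD n d q (gamD n l m) (Xd n) =
          (\<lambda>c. inverse q ^ m * mulD n d q (Xd n) (gamD n (l + 1) m) c
             - inverse q ^ m * qint q m * gamD n (l + 1) (m - 1) c
             + q ^ (l + 1) * inverse q ^ m * qint q m * mulD n d q (Gd n) (gamD n (l + 1) (m - 1)) c)"
proof
  fix c :: "(nat \<times> nat) \<times> (nat \<times> nat)"
  have i: "(0,0) \<in> Bidx n d" "(l, m) \<in> Bidx n d" "(0, 1) \<in> Bidx n d" using assms n0 d2 by auto
  let ?l1 = "(l + 1) mod n"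
  have j: "(?l1, m) \<in> Bidx n d" "(?l1, m - 1) \<in> Bidx n d" "?l1 < n" "m - 1 < d" using assms n0 by auto
  let ?al = "bv (0,1) (fst c) * q ^ (m * (n - 1))"
  let ?be = "if 1 \<le> m then bv (1,0) (fst c) * (q ^ (m * (n - 1)) * (qint q m * q ^ (l + 1))) else 0"
  let ?ga = "if 1 \<le> m then bv (0,0) (fst c) * (- inverse q * (qint q m * q ^ ((m - 1) * (n - 1)))) else 0"
  have "mulD n d q (gamD n l m) (Xd n) c = (\<Sum>g\<in>Bidx n d. oneL n g * dbprod n d q (0,0) (l,m) (0,1) g c)"
    unfolding gm_eq[OF assms(1)] Xd_def mulD_tt_oneL[OF i] by (rule refl)
  also have "\<dots> = (\<Sum>g\<in>Bidx n d. ?al * (oneL n g * pathmul n d (?l1, m) g (snd c))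
       + (?be * (oneL n g * pathmul n d (?l1, m - 1) g (snd c)) + ?ga * (oneL n g * pathmul n d (?l1, m - 1) g (snd c))))"
  proof (intro sum.cong refl)
    fix g assume g: "g \<in> Bidx n d"
    show "oneL n g * dbprod n d q (0,0) (l,m) (0,1) g c = ?al * (oneL n g * pathmul n d (?l1, m) g (snd c))
       + (?be * (oneL n g * pathmul n d (?l1, m - 1) g (snd c)) + ?ga * (oneL n g * pathmul n d (?l1, m - 1) g (snd c)))"
      unfolding db_01[OF i(2) g] by (simp add: algebra_simps)
  qed
  also have "\<dots> = ?al * bv (?l1, m) (snd c) + (?be * bv (?l1, m - 1) (snd c) + ?ga * bv (?l1, m - 1) (snd c))"
    by (simp only: sum.distrib sum_distrib_left[symmetric] sum_oneL_pm[OF j(1)] sum_oneL_pm[OF j(2)])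
  also have "\<dots> = inverse q ^ m * mulD n d q (Xd n) (gamD n (l + 1) m) c
             - inverse q ^ m * qint q m * gamD n (l + 1) (m - 1) c
             + q ^ (l + 1) * inverse q ^ m * qint q m * mulD n d q (Gd n) (gamD n (l + 1) (m - 1)) c"
  proof -
    have g1: "gamD n (l + 1) m = tens (bv (0,0)) (bv (?l1, m))" "gamD n (l + 1) (m - 1) = tens (bv (0,0)) (bv (?l1, m - 1))"
      by (simp_all add: gamD_def)
    have X1: "mulD n d q (Xd n) (gamD n (l + 1) m) = tens (bv (0,1)) (bv (?l1, m))"
      using X_gam[OF j(3) assms(2)] by (simp add: gamD_def)
    have G1: "mulD n d q (Gd n) (gamD n (l + 1) (m - 1)) = tens (bv (1,0)) (bv (?l1, m - 1))"
      using G_gam[OF j(3) j(4)] by (simp add: gamD_def)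
    show ?thesis
    proof (cases m)
      case 0
      then show ?thesis unfolding X1 G1 unfolding g1 qpow by (simp add: tens_def qint_def)
    next
      case (Suc k)
      have p: "q ^ (k * (n - 1)) = inverse q ^ k" by (rule qpow)
      show ?thesis unfolding X1 G1 unfolding g1 qpow using Suc p by (simp add: tens_def algebra_simps)
    qed
  qed
  finally show "mulD n d q (gamD n l m) (Xd n) c = inverse q ^ m * mulD n d q (Xd n) (gamD n (l + 1) m) c
             - inverse q ^ m * qint q m * gamD n (l + 1) (m - 1) c
             + q ^ (l + 1) * inverse q ^ m * qint q m * mulD n d q (Gd n) (gamD n (l + 1) (m - 1)) c" .
qed

end

context DD begin

lemma box_sum:
  "(\<Sum>idx \<in> {0..<n} \<times> {0..<d} \<times> {0..<n} \<times> {0..<d}. f idx * basisD n d q idx c)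
   = (if c \<in> Bidx n d \<times> Bidx n d then f (fst (fst c), snd (fst c), fst (snd c), snd (snd c)) * qf q (snd (fst c)) else 0)"
proof -
  let ?S = "{0..<n} \<times> {0..<d} \<times> {0..<n} \<times> {0..<d}"
  let ?ic = "(fst (fst c), snd (fst c), fst (snd c), snd (snd c))"
  have "(\<Sum>idx \<in> ?S. f idx * basisD n d q idx c) = (\<Sum>idx \<in> ?S. if idx = ?ic then f ?ic * qf q (snd (fst c)) else 0)"
  proof (intro sum.cong refl)
    fix idx assume idx: "idx \<in> ?S"
    obtain i j l m where ii: "idx = (i, j, l, m)" by (metis prod.collapse)
    have lt: "i < n" "j < d" "l < n" "m < d" using idx ii by auto
    show "f idx * basisD n d q idx c = (if idx = ?ic then f ?ic * qf q (snd (fst c)) else 0)"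
      unfolding ii basisD_cf[OF lt] by (cases c) auto
  qed
  also have "\<dots> = (if ?ic \<in> ?S then f ?ic * qf q (snd (fst c)) else 0)" by (simp add: sum.delta)
  also have "?ic \<in> ?S \<longleftrightarrow> c \<in> Bidx n d \<times> Bidx n d" by (cases c) auto
  finally show ?thesis by simp
qed

lemma basis_part:
  "\<forall>P \<in> Dspace n d. \<exists>!f. (\<forall>idx. idx \<notin> {0..<n} \<times> {0..<d} \<times> {0..<n} \<times> {0..<d} \<longrightarrow> f idx = 0)
        \<and> P = (\<lambda>c. \<Sum>idx \<in> {0..<n} \<times> {0..<d} \<times> {0..<n} \<times> {0..<d}. f idx * basisD n d q idx c)"
proof
  fix P :: "'a ten" assume P: "P \<in> Dspace n d"
  let ?S = "{0..<n} \<times> {0..<d} \<times> {0..<n} \<times> {0..<d}"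
  let ?f = "\<lambda>idx. if idx \<in> ?S then P ((fst idx, fst (snd idx)), (fst (snd (snd idx)), snd (snd (snd idx)))) / qf q (fst (snd idx)) else 0"
  show "\<exists>!f. (\<forall>idx. idx \<notin> ?S \<longrightarrow> f idx = 0) \<and> P = (\<lambda>c. \<Sum>idx \<in> ?S. f idx * basisD n d q idx c)"
  proof (rule ex1I[of _ ?f])
    show "(\<forall>idx. idx \<notin> ?S \<longrightarrow> ?f idx = 0) \<and> P = (\<lambda>c. \<Sum>idx \<in> ?S. ?f idx * basisD n d q idx c)"
    proof
      show "\<forall>idx. idx \<notin> ?S \<longrightarrow> ?f idx = 0" by simp
      show "P = (\<lambda>c. \<Sum>idx \<in> ?S. ?f idx * basisD n d q idx c)"
      proof
        fix c :: "(nat \<times> nat) \<times> (nat \<times> nat)"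
        show "P c = (\<Sum>idx \<in> ?S. ?f idx * basisD n d q idx c)"
        proof (cases "c \<in> Bidx n d \<times> Bidx n d")
          case True
          obtain i j l m where cc: "c = ((i, j), (l, m))" by (metis prod.collapse)
          have lt: "i < n" "j < d" "l < n" "m < d" using True cc by auto
          show ?thesis unfolding box_sum using True cc lt qf_nz[OF lt(2)] by simp
        next
          case False
          then have "P c = 0" using P unfolding Dspace_def by blast
          then show ?thesis unfolding box_sum using False by simp
        qed
      qed
    qed
  next
    fix g
    assume g: "(\<forall>idx. idx \<notin> ?S \<longrightarrow> g idx = 0) \<and> P = (\<lambda>c. \<Sum>idx \<in> ?S. g idx * basisD n d q idx c)"
    show "g = ?f"
    proof
      fix idx :: "nat \<times> nat \<times> nat \<times> nat"
      show "g idx = ?f idx"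
      proof (cases "idx \<in> ?S")
        case True
        obtain i j l m where ii: "idx = (i, j, l, m)" by (metis prod.collapse)
        have lt: "i < n" "j < d" "l < n" "m < d" using True ii by auto
        have "P ((i, j), (l, m)) = g (i, j, l, m) * qf q j"
          using g box_sum[of g "((i, j), (l, m))"] lt by simp
        then show ?thesis using True ii qf_nz[OF lt(2)] by (simp add: field_simps)
      next
        case False
        have "g idx = 0" using g False by blast
        then show ?thesis using False by simp
      qed
    qed
  qed
qed

end

theorem mainTheorem1:
  fixes q :: "'a::field" and n d :: nat
  assumes alg_closed: "\<forall>p :: 'a poly. degree p > 0 \<longrightarrow> (\<exists>x. poly p x = 0)"
    and d2: "d \<ge> 2" and dn: "d dvd n" and char: "(of_nat n :: 'a) \<noteq> 0"
    and qd: "q ^ d = 1" and qprim: "\<forall>k. 0 < k \<and> k < d \<longrightarrow> q ^ k \<noteq> 1"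
  shows
    "(\<forall>P \<in> Dspace n d. \<exists>!f. (\<forall>idx. idx \<notin> {0..<n} \<times> {0..<d} \<times> {0..<n} \<times> {0..<d} \<longrightarrow> f idx = 0)
        \<and> P = (\<lambda>c. \<Sum>idx \<in> {0..<n} \<times> {0..<d} \<times> {0..<n} \<times> {0..<d}. f idx * basisD n d q idx c))
   \<and> powD n d q (Gd n) n = oneD n
   \<and> powD n d q (Xd n) d = (\<lambda>_. 0)
   \<and> mulD n d q (Gd n) (Xd n) = (\<lambda>c. inverse q * mulD n d q (Xd n) (Gd n) c)
   \<and> (\<forall>l m l' m'. l < n \<and> m < d \<and> l' < n \<and> m' < d \<longrightarrow>
        mulD n d q (gamD n l m) (gamD n l' m') = tens (bv (0, 0)) (pathmul n d (l, m) (l', m')))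
   \<and> (\<forall>l m. l < n \<and> m < d \<longrightarrow>
        mulD n d q (gamD n l m) (Gd n) = (\<lambda>c. inverse q ^ m * mulD n d q (Gd n) (gamD n l m) c))
   \<and> (\<forall>l m. l < n \<and> m < d \<longrightarrow>
        mulD n d q (gamD n l m) (Xd n) =
          (\<lambda>c. inverse q ^ m * mulD n d q (Xd n) (gamD n (l + 1) m) c
             - inverse q ^ m * qint q m * gamD n (l + 1) (m - 1) c
             + q ^ (l + 1) * inverse q ^ m * qint q m * mulD n d q (Gd n) (gamD n (l + 1) (m - 1)) c))"
proof -
  have n0: "0 < n" using char by (cases n) auto
  interpret DD n d q using d2 dn n0 qd qprim by unfold_locales auto
  have G: "powD n d q (Gd n) n = oneD n" by (simp add: powG oneD_def)
  show ?thesis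
    using basis_part G powX_d GX gam_gam gam_G gam_X by blast
qed

end
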